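(* For every odd integer $k\geq 5$ and every integer $n\geq 2$, $$Q(n,k)\geq 2^{\left(\frac{k-3}{2}\right)^{\lfloor\frac{n-1}{2}\rfloor}\left(\frac{k-1}{2}\right)^{\lceil\frac{n+1}{2}\rceil}}>2^{\left(\frac{k-3}{2}\right)^{n/2}\left(\frac{k-1}{2}\right)^{n/2}}.$$
   Context: An $n$-ary quasigroup of order $k$ is a function $f:\Sigma^n\to\Sigma$, where $\Sigma=\{0,1,\dots,k-1\}$, such that fixing any $n-1$ of its arguments to arbitrary values of $\Sigma$ yields a bijection $\Sigma\to\Sigma$ in the remaining argument. $Q(n,k)$ denotes the number of distinct $n$-ary quasigroups of order $k$ on the fixed set $\Sigma=\{0,1,\dots,k-1\}$. *)

theory Defs
  imports "HOL-Library.FuncSet" Complex_Main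
begin

text \<open>Sigma = {0..<k}. An n-ary operation is a function from length-n lists over Sigma
  to Sigma, taken extensionally (value undefined outside the domain), so that distinct
  functions correspond to distinct operations.\<close>

definition arg_tuples :: "nat \<Rightarrow> nat \<Rightarrow> nat list set" where
  "arg_tuples n k = {xs. length xs = n \<and> set xs \<subseteq> {0..<k}}"

definition is_quasigroup :: "nat \<Rightarrow> nat \<Rightarrow> (nat list \<Rightarrow> nat) \<Rightarrow> bool" where
  "is_quasigroup n k f \<longleftrightarrow>
     f \<in> arg_tuples n k \<rightarrow>\<^sub>E {0..<k} \<and>
     (\<forall>i<n. \<forall>xs \<in> arg_tuples n k.
        bij_betw (\<lambda>a. f (xs[i := a])) {0..<k} {0..<k})"

definition Q :: "nat \<Rightarrow> nat \<Rightarrow> nat" where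
  "Q n k = card {f. is_quasigroup n k f}"

end

theory Submission
  imports Defs "HOL-Number_Theory.Cong"
begin


definition qg :: "nat \<Rightarrow> nat \<Rightarrow> (nat list \<Rightarrow> nat) \<Rightarrow> bool" where
 "qg n k f \<longleftrightarrow> (\<forall>xs\<in>arg_tuples n k. f xs < k) \<and>
    (\<forall>i<n. \<forall>xs\<in>arg_tuples n k. bij_betw (\<lambda>a. f (xs[i:=a])) {0..<k} {0..<k})"

lemma finite_arg_tuples: "finite (arg_tuples n k)"
  unfolding arg_tuples_def using finite_lists_length_eq[of "{0..<k}" n] by (simp add: conj_commute)

lemma arg_tuples_upd: "xs \<in> arg_tuples n k \<Longrightarrow> a < k \<Longrightarrow> xs[i:=a] \<in> arg_tuples n k"
  unfolding arg_tuples_def using set_update_subset_insert[of xs i a] by auto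

lemma qg_is_quasigroup: assumes "qg n k f" shows "is_quasigroup n k (restrict f (arg_tuples n k))"
  unfolding is_quasigroup_def
proof
  show "restrict f (arg_tuples n k) \<in> arg_tuples n k \<rightarrow>\<^sub>E {0..<k}"
    using assms unfolding qg_def by auto
  show "\<forall>i<n. \<forall>xs\<in>arg_tuples n k. bij_betw (\<lambda>a. restrict f (arg_tuples n k) (xs[i := a])) {0..<k} {0..<k}"
  proof (intro allI impI ballI)
    fix i xs assume i: "i < n" and xs: "xs \<in> arg_tuples n k"
    have "bij_betw (\<lambda>a. f (xs[i := a])) {0..<k} {0..<k}" using assms i xs unfolding qg_def by auto
    moreover have "bij_betw (\<lambda>a. restrict f (arg_tuples n k) (xs[i := a])) {0..<k} {0..<k}
       = bij_betw (\<lambda>a. f (xs[i := a])) {0..<k} {0..<k}"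
      by (rule bij_betw_cong) (use arg_tuples_upd[OF xs] in auto)
    ultimately show "bij_betw (\<lambda>a. restrict f (arg_tuples n k) (xs[i := a])) {0..<k} {0..<k}"
      by simp
  qed
qed

lemma qg_bij: "qg n k f \<Longrightarrow> i < n \<Longrightarrow> xs \<in> arg_tuples n k \<Longrightarrow> bij_betw (\<lambda>a. f (xs[i:=a])) {0..<k} {0..<k}"
  by (simp add: qg_def)

lemma qg_line_inj: "qg n k f \<Longrightarrow> i < n \<Longrightarrow> xs \<in> arg_tuples n k \<Longrightarrow> a < k \<Longrightarrow> b < k
   \<Longrightarrow> f (xs[i:=a]) = f (xs[i:=b]) \<Longrightarrow> a = b"
  using inj_onD[OF bij_betw_imp_inj_on[OF qg_bij]] by force

lemma qg_line_surj: assumes "qg n k f" "i < n" "xs \<in> arg_tuples n k" "u < k"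
  shows "\<exists>a<k. f (xs[i:=a]) = u"
proof -
  have "u \<in> (\<lambda>a. f (xs[i:=a])) ` {0..<k}" using bij_betw_imp_surj_on[OF qg_bij[OF assms(1-3)]] assms(4) by auto
  thus ?thesis by auto
qed

lemma Q_ge_card_image:
  assumes "inj_on (\<lambda>x. restrict (F x) (arg_tuples n k)) A" and "finite A" and "\<And>x. x \<in> A \<Longrightarrow> qg n k (F x)"
  shows "card A \<le> Q n k"
proof -
  let ?G = "\<lambda>x. restrict (F x) (arg_tuples n k)"
  have fin: "finite {f. is_quasigroup n k f}"
  proof (rule finite_subset)
    show "{f. is_quasigroup n k f} \<subseteq> arg_tuples n k \<rightarrow>\<^sub>E {0..<k}" unfolding is_quasigroup_def by auto
    show "finite (arg_tuples n k \<rightarrow>\<^sub>E {0..<k})" by (rule finite_PiE) (auto simp: finite_arg_tuples)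
  qed
  have "?G ` A \<subseteq> {f. is_quasigroup n k f}" using assms(3) qg_is_quasigroup by auto
  hence "card (?G ` A) \<le> Q n k" unfolding Q_def using fin card_mono by blast
  thus ?thesis using card_image[OF assms(1)] by simp
qed


locale ctx = fixes m k :: nat assumes k_def: "k = 2*m+1" and m_pos: "1 \<le> m"
begin

definition iota :: "nat \<Rightarrow> nat" where
  "iota v = (if v < 2*m then (if even v then v+1 else v-1) else v)"

lemma iota_cases: "v < 2*m \<Longrightarrow> even v \<Longrightarrow> iota v = v+1"
  "v < 2*m \<Longrightarrow> odd v \<Longrightarrow> iota v = v-1" "\<not> v < 2*m \<Longrightarrow> iota v = v"
  unfolding iota_def by auto

lemma iota_lt: assumes "v < 2*m" shows "iota v < 2*m"
proof (cases "even v")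
  case True
  then obtain j where "v = 2*j" by blast
  hence "v + 1 < 2*m" using assms by presburger
  thus ?thesis using iota_cases(1)[OF assms True] by simp
next
  case False thus ?thesis using assms iota_cases(2)[OF assms False] by linarith
qed

lemma iota_iota: "iota (iota v) = v"
proof (cases "v < 2*m")
  case True
  show ?thesis
  proof (cases "even v")
    case e: True
    obtain j where "v = 2*j" using e by blast
    hence l: "v+1 < 2*m" using True by presburger
    have o: "odd (v+1)" using e by simp
    show ?thesis using iota_cases(1)[OF True e] iota_cases(2)[OF l o] by simp
  next
    case o: False
    have v0: "v \<ge> 1" using o by (cases v) auto
    have l: "v-1 < 2*m" using True by linarith
    have e: "even (v-1)" using o v0 by simp
    show ?thesis using iota_cases(2)[OF True o] iota_cases(1)[OF l e] v0 by simp
  qed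
next
  case False thus ?thesis using iota_cases(3) by simp
qed

lemma iota_neq: assumes "v < 2*m" shows "iota v \<noteq> v"
proof (cases "even v")
  case True thus ?thesis using iota_cases(1)[OF assms True] by simp
next
  case False
  hence "v \<ge> 1" by (cases v) auto
  thus ?thesis using iota_cases(2)[OF assms False] by simp
qed

lemma iota_div: assumes "v < 2*m" shows "iota v div 2 = v div 2"
proof (cases "even v")
  case True
  then obtain j where j: "v = 2*j" by blast
  show ?thesis using iota_cases(1)[OF assms True] j by simp
next
  case False
  then obtain j where j: "v = 2*j+1" using oddE by blast
  show ?thesis using iota_cases(2)[OF assms False] j by simp
qed

lemma iota_inj: "iota u = iota v \<Longrightarrow> u = v"
  by (metis iota_iota)

lemma iota_lt_k: assumes "v < k" shows "iota v < k"
proof (cases "v < 2*m")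
  case True thus ?thesis using iota_lt[OF True] k_def by simp
next
  case False thus ?thesis using iota_cases(3) assms by simp
qed

definition closedc :: "nat \<Rightarrow> (nat list \<Rightarrow> nat) \<Rightarrow> nat list set \<Rightarrow> bool" where
  "closedc n f K \<longleftrightarrow> K \<subseteq> arg_tuples n k \<and> (\<forall>z\<in>K. f z < 2*m) \<and>
     (\<forall>z\<in>K. \<forall>i<n. \<exists>a<k. z[i:=a] \<in> K \<and> f (z[i:=a]) = iota (f z))"

lemma closedc_sub: "closedc n f K \<Longrightarrow> K \<subseteq> arg_tuples n k" by (simp add: closedc_def)
lemma closedc_lt: assumes "closedc n f K" "z \<in> K" shows "f z < 2*m"
proof -
  have "\<forall>z\<in>K. f z < 2*m" using assms(1) by (simp add: closedc_def)
  thus ?thesis using assms(2) by simp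
qed
lemma closedc_partner: assumes "closedc n f K" "z \<in> K" "i < n"
  shows "\<exists>a<k. z[i:=a] \<in> K \<and> f (z[i:=a]) = iota (f z)"
proof -
  have "\<forall>z\<in>K. \<forall>i<n. \<exists>a<k. z[i:=a] \<in> K \<and> f (z[i:=a]) = iota (f z)" using assms(1) by (simp add: closedc_def)
  thus ?thesis using assms(2,3) by simp
qed
lemma closedcI: "K \<subseteq> arg_tuples n k \<Longrightarrow> (\<And>z. z \<in> K \<Longrightarrow> f z < 2*m) \<Longrightarrow>
   (\<And>z i. z \<in> K \<Longrightarrow> i < n \<Longrightarrow> \<exists>a<k. z[i:=a] \<in> K \<and> f (z[i:=a]) = iota (f z)) \<Longrightarrow> closedc n f K"
  by (simp add: closedc_def)

definition cls :: "(nat list \<Rightarrow> nat) \<Rightarrow> nat list set \<Rightarrow> nat" where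
  "cls f K = f (SOME z. z \<in> K) div 2"

definition struct :: "nat \<Rightarrow> (nat list \<Rightarrow> nat) \<Rightarrow> nat list set set \<Rightarrow> bool" where
  "struct n f Ks \<longleftrightarrow> qg n k f \<and> (\<forall>K\<in>Ks. K \<noteq> {}) \<and> (\<forall>K\<in>Ks. closedc n f K)
     \<and> (\<forall>K\<in>Ks. \<forall>z\<in>K. f z div 2 = cls f K)
     \<and> (\<forall>K\<in>Ks. \<forall>K'\<in>Ks. \<forall>z. z \<in> K \<longrightarrow> z \<in> K' \<longrightarrow> K = K')"

lemma structI: "qg n k f \<Longrightarrow> (\<And>K. K \<in> Ks \<Longrightarrow> K \<noteq> {}) \<Longrightarrow> (\<And>K. K \<in> Ks \<Longrightarrow> closedc n f K)
  \<Longrightarrow> (\<And>K z. K \<in> Ks \<Longrightarrow> z \<in> K \<Longrightarrow> f z div 2 = cls f K)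
  \<Longrightarrow> (\<And>K K' z. K \<in> Ks \<Longrightarrow> K' \<in> Ks \<Longrightarrow> z \<in> K \<Longrightarrow> z \<in> K' \<Longrightarrow> K = K') \<Longrightarrow> struct n f Ks"
  by (simp add: struct_def)

definition sw :: "(nat list \<Rightarrow> nat) \<Rightarrow> nat list set set \<Rightarrow> nat list \<Rightarrow> nat" where
  "sw f S z = (if z \<in> \<Union>S then iota (f z) else f z)"

lemma struct_qg: "struct n f Ks \<Longrightarrow> qg n k f" by (simp add: struct_def)

lemma struct_closed: assumes "struct n f Ks" "K \<in> Ks" shows "closedc n f K"
proof -
  have "\<forall>K\<in>Ks. closedc n f K" using assms(1) by (simp add: struct_def)
  thus ?thesis using assms(2) by simp
qed

lemma struct_ne: assumes "struct n f Ks" "K \<in> Ks" shows "K \<noteq> {}"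
proof -
  have "\<forall>K\<in>Ks. K \<noteq> {}" using assms(1) by (simp add: struct_def)
  thus ?thesis using assms(2) by simp
qed

lemma struct_cls: assumes "struct n f Ks" "K \<in> Ks" "z \<in> K" shows "f z div 2 = cls f K"
proof -
  have "\<forall>K\<in>Ks. \<forall>z\<in>K. f z div 2 = cls f K" using assms(1) by (simp add: struct_def)
  thus ?thesis using assms(2,3) by simp
qed

lemma struct_disj: assumes "struct n f Ks" "K \<in> Ks" "K' \<in> Ks" "z \<in> K" "z \<in> K'" shows "K = K'"
proof -
  have "\<forall>K\<in>Ks. \<forall>K'\<in>Ks. \<forall>z. z \<in> K \<longrightarrow> z \<in> K' \<longrightarrow> K = K'" using assms(1) by (simp add: struct_def)
  thus ?thesis using assms(2-5) by blast
qed

lemma struct_finite: "struct n f Ks \<Longrightarrow> finite Ks"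
proof -
  assume s: "struct n f Ks"
  have "Ks \<subseteq> Pow (arg_tuples n k)" using struct_closed[OF s] closedc_sub by blast
  thus "finite Ks" using finite_arg_tuples finite_Pow_iff finite_subset by metis
qed

lemma sw_partner:
  assumes s: "struct n f Ks" and S: "S \<subseteq> Ks" and K: "K \<in> S" and z: "z \<in> K" and i: "i < n"
    and b: "b < k" and eq: "iota (f z) = f (z[i:=b])"
  shows "z[i:=b] \<in> K"
proof -
  have c: "closedc n f K" using s S K struct_closed by blast
  then obtain a where a: "a < k" "z[i:=a] \<in> K" "f (z[i:=a]) = iota (f z)"
    using closedc_partner[OF c z i] by blast
  have zt: "z \<in> arg_tuples n k" using closedc_sub[OF c] z by auto
  have "f (z[i:=a]) = f (z[i:=b])" using a eq by simp
  hence "a = b" using qg_line_inj[OF struct_qg[OF s] i zt a(1) b] by simp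
  thus ?thesis using a by simp
qed

lemma sw_qg: assumes s: "struct n f Ks" and S: "S \<subseteq> Ks" shows "qg n k (sw f S)"
  unfolding qg_def
proof (intro conjI ballI allI impI)
  have q: "qg n k f" using s struct_qg by blast
  fix xs assume "xs \<in> arg_tuples n k"
  thus "sw f S xs < k" using q iota_lt_k unfolding qg_def sw_def by auto
next
  have q: "qg n k f" using s struct_qg by blast
  fix i xs assume i: "i < n" and xs: "xs \<in> arg_tuples n k"
  let ?g = "\<lambda>a. sw f S (xs[i:=a])"
  have into: "?g ` {0..<k} \<subseteq> {0..<k}"
    using q arg_tuples_upd[OF xs] iota_lt_k unfolding qg_def sw_def by auto
  have inj: "inj_on ?g {0..<k}"
  proof (rule inj_onI)
    fix a b assume a: "a \<in> {0..<k}" and b: "b \<in> {0..<k}" and eq: "?g a = ?g b"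
    have key: "\<And>a b. a < k \<Longrightarrow> b < k \<Longrightarrow> xs[i:=a] \<in> \<Union>S \<Longrightarrow> xs[i:=b] \<notin> \<Union>S
        \<Longrightarrow> iota (f (xs[i:=a])) \<noteq> f (xs[i:=b])"
    proof
      fix a b assume a: "a < k" and b: "b < k" and ina: "xs[i:=a] \<in> \<Union>S" and nb: "xs[i:=b] \<notin> \<Union>S"
        and e: "iota (f (xs[i:=a])) = f (xs[i:=b])"
      obtain K where K: "K \<in> S" "xs[i:=a] \<in> K" using ina by blast
      have "(xs[i:=a])[i:=b] \<in> K" using sw_partner[OF s S K i b] e by simp
      thus False using nb K by auto
    qed
    show "a = b"
    proof (cases "xs[i:=a] \<in> \<Union>S"; cases "xs[i:=b] \<in> \<Union>S")
      assume "xs[i:=a] \<in> \<Union>S" "xs[i:=b] \<in> \<Union>S"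
      hence "f (xs[i:=a]) = f (xs[i:=b])" using eq iota_inj unfolding sw_def by auto
      thus "a = b" using qg_line_inj[OF q i xs] a b by auto
    next
      assume "xs[i:=a] \<notin> \<Union>S" "xs[i:=b] \<notin> \<Union>S"
      hence "f (xs[i:=a]) = f (xs[i:=b])" using eq unfolding sw_def by auto
      thus "a = b" using qg_line_inj[OF q i xs] a b by auto
    next
      assume "xs[i:=a] \<in> \<Union>S" "xs[i:=b] \<notin> \<Union>S"
      thus "a = b" using key[of a b] a b eq unfolding sw_def by auto
    next
      assume "xs[i:=a] \<notin> \<Union>S" "xs[i:=b] \<in> \<Union>S"
      thus "a = b" using key[of b a] a b eq unfolding sw_def by auto
    qed
  qed
  have "?g ` {0..<k} = {0..<k}" using endo_inj_surj[OF _ into inj] by simp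
  thus "bij_betw ?g {0..<k} {0..<k}" using inj unfolding bij_betw_def by simp
qed

lemma sw_inj: assumes s: "struct n f Ks"
  shows "inj_on (\<lambda>S. restrict (sw f S) (arg_tuples n k)) (Pow Ks)"
proof (rule inj_onI)
  fix S S' assume S: "S \<in> Pow Ks" and S': "S' \<in> Pow Ks"
    and eq: "restrict (sw f S) (arg_tuples n k) = restrict (sw f S') (arg_tuples n k)"
  have ptw: "\<And>z. z \<in> arg_tuples n k \<Longrightarrow> sw f S z = sw f S' z"
    using eq by (metis restrict_apply')
  have *: "\<And>S S' K. S \<subseteq> Ks \<Longrightarrow> S' \<subseteq> Ks \<Longrightarrow> K \<in> S \<Longrightarrow> K \<notin> S'
       \<Longrightarrow> (\<And>z. z \<in> arg_tuples n k \<Longrightarrow> sw f S z = sw f S' z) \<Longrightarrow> False"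
  proof -
    fix S S' K assume S: "S \<subseteq> Ks" and S': "S' \<subseteq> Ks" and K: "K \<in> S" "K \<notin> S'"
      and p: "\<And>z. z \<in> arg_tuples n k \<Longrightarrow> sw f S z = sw f S' z"
    have KK: "K \<in> Ks" "K \<noteq> {}" "closedc n f K" using S K struct_ne[OF s] struct_closed[OF s] by auto
    then obtain z where z: "z \<in> K" by blast
    have zt: "z \<in> arg_tuples n k" and lt: "f z < 2*m" using closedc_sub[OF KK(3)] z closedc_lt[OF KK(3) z] by auto
    have "z \<notin> \<Union>S'" using struct_disj[OF s] S' K KK z by blast
    hence "sw f S' z = f z" unfolding sw_def by simp
    moreover have "sw f S z = iota (f z)" using z K unfolding sw_def by auto
    ultimately show False using p[OF zt] iota_neq[OF lt] by simp
  qed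
  show "S = S'"
  proof (rule ccontr)
    assume "S \<noteq> S'"
    then obtain K where "K \<in> S \<and> K \<notin> S' \<or> K \<in> S' \<and> K \<notin> S" by blast
    thus False using *[of S S' K] *[of S' S K] S S' ptw by (metis PowD)
  qed
qed

lemma struct_Q: assumes "struct n f Ks" shows "2 ^ card Ks \<le> Q n k"
proof -
  have "card (Pow Ks) \<le> Q n k"
    by (rule Q_ge_card_image[OF sw_inj[OF assms]])
       (use struct_finite[OF assms] sw_qg[OF assms] in auto)
  thus ?thesis using card_Pow struct_finite[OF assms] by metis
qed

lemma sw_in_comp: assumes s: "struct n f Ks" and S: "S \<subseteq> Ks" and K: "K \<in> Ks" and z: "z \<in> K"
  shows "sw f S z = (if K \<in> S then iota (f z) else f z)"
proof (cases "K \<in> S")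
  case True
  hence "z \<in> \<Union>S" using z by blast
  thus ?thesis using True unfolding sw_def by simp
next
  case False
  have "z \<notin> \<Union>S"
  proof
    assume "z \<in> \<Union>S"
    then obtain K' where K': "K' \<in> S" "z \<in> K'" by blast
    have "K' = K" using struct_disj[OF s _ K K'(2) z] K'(1) S by blast
    thus False using K' False by simp
  qed
  thus ?thesis using False unfolding sw_def by simp
qed

lemma sw_struct: assumes s: "struct n f Ks" and S: "S \<subseteq> Ks" shows "struct n (sw f S) Ks"
proof (rule structI)
  show "qg n k (sw f S)" by (rule sw_qg[OF s S])
  show "\<And>K K' z. K \<in> Ks \<Longrightarrow> K' \<in> Ks \<Longrightarrow> z \<in> K \<Longrightarrow> z \<in> K' \<Longrightarrow> K = K'"
    by (rule struct_disj[OF s])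
  show "\<And>K. K \<in> Ks \<Longrightarrow> K \<noteq> {}" by (rule struct_ne[OF s])
  fix K assume K: "K \<in> Ks"
  have c: "closedc n f K" using struct_closed[OF s K] .
  have lt: "\<And>z. z \<in> K \<Longrightarrow> f z < 2*m" using closedc_lt[OF c] .
  have sv: "\<And>z. z \<in> K \<Longrightarrow> sw f S z = (if K \<in> S then iota (f z) else f z)"
    using sw_in_comp[OF s S K] .
  show "closedc n (sw f S) K"
  proof (rule closedcI)
    show "K \<subseteq> arg_tuples n k" using closedc_sub[OF c] .
    fix z assume z: "z \<in> K"
    show "sw f S z < 2*m" using sv[OF z] lt[OF z] iota_lt[OF lt[OF z]] by simp
    fix i assume i: "i < n"
    obtain a where a: "a < k" "z[i:=a] \<in> K" "f (z[i:=a]) = iota (f z)"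
      using closedc_partner[OF c z i] by blast
    have "sw f S (z[i:=a]) = iota (sw f S z)"
    proof (cases "K \<in> S")
      case True thus ?thesis using sv[OF z] sv[OF a(2)] a(3) iota_iota by simp
    next
      case False thus ?thesis using sv[OF z] sv[OF a(2)] a(3) by simp
    qed
    thus "\<exists>a<k. z[i := a] \<in> K \<and> sw f S (z[i := a]) = iota (sw f S z)" using a by blast
  qed
next
  fix K z assume K: "K \<in> Ks" and z: "z \<in> K"
  have c: "closedc n f K" using struct_closed[OF s K] .
  have lt: "\<And>z. z \<in> K \<Longrightarrow> f z < 2*m" using closedc_lt[OF c] .
  have sv: "\<And>z. z \<in> K \<Longrightarrow> sw f S z = (if K \<in> S then iota (f z) else f z)"
    using sw_in_comp[OF s S K] .
  have ne: "(SOME z. z \<in> K) \<in> K" using struct_ne[OF s K] by (simp add: some_in_eq)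
  have dv: "\<And>z. z \<in> K \<Longrightarrow> sw f S z div 2 = f z div 2"
  proof -
    fix z assume z: "z \<in> K"
    show "sw f S z div 2 = f z div 2" using sv[OF z] lt[OF z] iota_div[OF lt[OF z]] by simp
  qed
  have ce: "cls (sw f S) K = cls f K" unfolding cls_def using dv[OF ne] .
  show "sw f S z div 2 = cls (sw f S) K" using dv[OF z] struct_cls[OF s K z] ce by simp
qed


lemma tuples_app: "x \<in> arg_tuples a k \<Longrightarrow> y \<in> arg_tuples b k \<Longrightarrow> x @ y \<in> arg_tuples (a+b) k"
  unfolding arg_tuples_def by auto

lemma tuples_take: "xs \<in> arg_tuples (a+b) k \<Longrightarrow> take a xs \<in> arg_tuples a k"
  unfolding arg_tuples_def by (auto dest: in_set_takeD)

lemma tuples_drop: "xs \<in> arg_tuples (a+b) k \<Longrightarrow> drop a xs \<in> arg_tuples b k"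
  unfolding arg_tuples_def by (auto dest: in_set_dropD)

lemma tuples_len: "xs \<in> arg_tuples n k \<Longrightarrow> length xs = n"
  unfolding arg_tuples_def by auto

lemma tuples_split: "xs \<in> arg_tuples (a+b) k \<Longrightarrow> xs = take a xs @ drop a xs" by simp

definition cmp :: "nat \<Rightarrow> (nat \<Rightarrow> nat \<Rightarrow> nat) \<Rightarrow> (nat list \<Rightarrow> nat) \<Rightarrow> (nat list \<Rightarrow> nat) \<Rightarrow> nat list \<Rightarrow> nat" where
  "cmp a q G H xs = q (G (take a xs)) (H (drop a xs))"

lemma cmp_app: "length x = a \<Longrightarrow> cmp a q G H (x @ y) = q (G x) (H y)"
  unfolding cmp_def by simp

definition latin :: "(nat \<Rightarrow> nat \<Rightarrow> nat) \<Rightarrow> bool" where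
  "latin q \<longleftrightarrow> (\<forall>u<k. bij_betw (q u) {0..<k} {0..<k}) \<and> (\<forall>v<k. bij_betw (\<lambda>u. q u v) {0..<k} {0..<k})"

lemma latin_row: "latin q \<Longrightarrow> u < k \<Longrightarrow> bij_betw (q u) {0..<k} {0..<k}" by (simp add: latin_def)
lemma latin_col: "latin q \<Longrightarrow> v < k \<Longrightarrow> bij_betw (\<lambda>u. q u v) {0..<k} {0..<k}" by (simp add: latin_def)
lemma latin_lt: assumes "latin q" "u < k" "v < k" shows "q u v < k"
  using bij_betwE[OF latin_row[OF assms(1,2)]] assms(3) by auto

lemma qg_lt: "qg n k f \<Longrightarrow> xs \<in> arg_tuples n k \<Longrightarrow> f xs < k" by (simp add: qg_def)

lemma cmp_qg: assumes G: "qg a k G" and H: "qg b k H" and q: "latin q"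
  shows "qg (a+b) k (cmp a q G H)"
  unfolding qg_def
proof (intro conjI ballI allI impI)
  fix xs assume xs: "xs \<in> arg_tuples (a+b) k"
  show "cmp a q G H xs < k" unfolding cmp_def
    using latin_lt[OF q qg_lt[OF G tuples_take[OF xs]] qg_lt[OF H tuples_drop[OF xs]]] .
next
  fix i xs assume i: "i < a+b" and xs: "xs \<in> arg_tuples (a+b) k"
  have xa: "take a xs \<in> arg_tuples a k" and xb: "drop a xs \<in> arg_tuples b k"
    using tuples_take[OF xs] tuples_drop[OF xs] .
  show "bij_betw (\<lambda>c. cmp a q G H (xs[i:=c])) {0..<k} {0..<k}"
  proof (cases "i < a")
    case True
    have eq: "\<And>c. cmp a q G H (xs[i:=c]) = q (G ((take a xs)[i:=c])) (H (drop a xs))"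
      unfolding cmp_def using True by (simp add: take_update_swap)
    have b1: "bij_betw (\<lambda>c. G ((take a xs)[i:=c])) {0..<k} {0..<k}" using qg_bij[OF G True xa] .
    have b2: "bij_betw (\<lambda>u. q u (H (drop a xs))) {0..<k} {0..<k}" using latin_col[OF q qg_lt[OF H xb]] .
    have "bij_betw ((\<lambda>u. q u (H (drop a xs))) \<circ> (\<lambda>c. G ((take a xs)[i:=c]))) {0..<k} {0..<k}"
      using bij_betw_trans[OF b1 b2] .
    thus ?thesis unfolding eq by (simp add: o_def)
  next
    case False
    have eq: "\<And>c. cmp a q G H (xs[i:=c]) = q (G (take a xs)) (H ((drop a xs)[i-a:=c]))"
      unfolding cmp_def using False by (simp add: drop_update_swap)
    have ib: "i - a < b" using i False by simp
    have b1: "bij_betw (\<lambda>c. H ((drop a xs)[i-a:=c])) {0..<k} {0..<k}" using qg_bij[OF H ib xb] .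
    have b2: "bij_betw (q (G (take a xs))) {0..<k} {0..<k}" using latin_row[OF q qg_lt[OF G xa]] .
    have "bij_betw ((q (G (take a xs))) \<circ> (\<lambda>c. H ((drop a xs)[i-a:=c]))) {0..<k} {0..<k}"
      using bij_betw_trans[OF b1 b2] .
    thus ?thesis unfolding eq by (simp add: o_def)
  qed
qed


definition goodok :: "(nat \<Rightarrow> nat \<Rightarrow> nat) \<Rightarrow> (nat \<Rightarrow> nat \<Rightarrow> bool) \<Rightarrow> (nat \<Rightarrow> nat \<Rightarrow> nat) \<Rightarrow> bool" where
  "goodok q good h \<longleftrightarrow> (\<forall>u v. u < 2*m \<longrightarrow> v < 2*m \<longrightarrow> good (u div 2) (v div 2) \<longrightarrow>
     q u v < 2*m \<and> q u v div 2 = h (u div 2) (v div 2) \<and> q (iota u) v = iota (q u v) \<and> q u (iota v) = iota (q u v))"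

lemma goodokD: assumes "goodok q good h" "u < 2*m" "v < 2*m" "good (u div 2) (v div 2)"
  shows "q u v < 2*m" "q u v div 2 = h (u div 2) (v div 2)" "q (iota u) v = iota (q u v)" "q u (iota v) = iota (q u v)"
  using assms unfolding goodok_def by blast+

definition cellclosed :: "(nat \<Rightarrow> nat \<Rightarrow> nat) \<Rightarrow> (nat \<times> nat) set \<Rightarrow> bool" where
  "cellclosed q C \<longleftrightarrow> C \<subseteq> {0..<k} \<times> {0..<k} \<and> C \<noteq> {} \<and>
     (\<forall>u v. (u,v) \<in> C \<longrightarrow> q u v < 2*m \<and> (\<exists>u'<k. (u',v) \<in> C \<and> q u' v = iota (q u v))
                       \<and> (\<exists>v'<k. (u,v') \<in> C \<and> q u v' = iota (q u v)))"

definition clsC :: "(nat \<Rightarrow> nat \<Rightarrow> nat) \<Rightarrow> (nat \<times> nat) set \<Rightarrow> nat" where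
  "clsC q C = (case SOME c. c \<in> C of (u,v) \<Rightarrow> q u v div 2)"

definition cellsok :: "(nat \<Rightarrow> nat \<Rightarrow> nat) \<Rightarrow> (nat \<Rightarrow> nat \<Rightarrow> bool) \<Rightarrow> (nat \<times> nat) set set \<Rightarrow> bool" where
  "cellsok q good Cs \<longleftrightarrow> (\<forall>C\<in>Cs. cellclosed q C) \<and> (\<forall>C\<in>Cs. \<forall>u v. (u,v) \<in> C \<longrightarrow> q u v div 2 = clsC q C)
    \<and> (\<forall>C\<in>Cs. \<forall>u v. (u,v) \<in> C \<longrightarrow> \<not> (u < 2*m \<and> v < 2*m \<and> good (u div 2) (v div 2)))
    \<and> (\<forall>C\<in>Cs. \<forall>C'\<in>Cs. \<forall>c. c \<in> C \<longrightarrow> c \<in> C' \<longrightarrow> C = C')"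

lemma cellsok_closed: assumes "cellsok q good Cs" "C \<in> Cs" shows "cellclosed q C"
proof -
  have "\<forall>C\<in>Cs. cellclosed q C" using assms(1) by (simp add: cellsok_def)
  thus ?thesis using assms(2) by simp
qed

lemma cellsok_cls: assumes "cellsok q good Cs" "C \<in> Cs" "(u,v) \<in> C" shows "q u v div 2 = clsC q C"
proof -
  have "\<forall>C\<in>Cs. \<forall>u v. (u,v) \<in> C \<longrightarrow> q u v div 2 = clsC q C" using assms(1) by (simp add: cellsok_def)
  thus ?thesis using assms(2,3) by blast
qed

lemma cellsok_notgood: assumes "cellsok q good Cs" "C \<in> Cs" "(u,v) \<in> C" "u < 2*m" "v < 2*m" "good (u div 2) (v div 2)"
  shows False
proof -
  have "\<forall>C\<in>Cs. \<forall>u v. (u,v) \<in> C \<longrightarrow> \<not> (u < 2*m \<and> v < 2*m \<and> good (u div 2) (v div 2))"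
    using assms(1) by (simp add: cellsok_def)
  thus ?thesis using assms(2-6) by blast
qed

lemma cellsok_disj: assumes "cellsok q good Cs" "C \<in> Cs" "C' \<in> Cs" "c \<in> C" "c \<in> C'" shows "C = C'"
proof -
  have "\<forall>C\<in>Cs. \<forall>C'\<in>Cs. \<forall>c. c \<in> C \<longrightarrow> c \<in> C' \<longrightarrow> C = C'" using assms(1) by (simp add: cellsok_def)
  thus ?thesis using assms(2-5) by blast
qed

lemma cellclosed_sub: "cellclosed q C \<Longrightarrow> (u,v) \<in> C \<Longrightarrow> u < k \<and> v < k"
  unfolding cellclosed_def by auto

lemma cellclosed_ne: "cellclosed q C \<Longrightarrow> C \<noteq> {}"
  unfolding cellclosed_def by auto

lemma cellclosed_pt: assumes "cellclosed q C" "(u,v) \<in> C"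
  shows "q u v < 2*m" "\<exists>u'<k. (u',v) \<in> C \<and> q u' v = iota (q u v)" "\<exists>v'<k. (u,v') \<in> C \<and> q u v' = iota (q u v)"
proof -
  have "\<forall>u v. (u,v) \<in> C \<longrightarrow> q u v < 2*m \<and> (\<exists>u'<k. (u',v) \<in> C \<and> q u' v = iota (q u v))
                       \<and> (\<exists>v'<k. (u,v') \<in> C \<and> q u v' = iota (q u v))" using assms(1) by (simp add: cellclosed_def)
  hence "q u v < 2*m \<and> (\<exists>u'<k. (u',v) \<in> C \<and> q u' v = iota (q u v))
                       \<and> (\<exists>v'<k. (u,v') \<in> C \<and> q u v' = iota (q u v))" using assms(2) by blast
  thus "q u v < 2*m" "\<exists>u'<k. (u',v) \<in> C \<and> q u' v = iota (q u v)" "\<exists>v'<k. (u,v') \<in> C \<and> q u v' = iota (q u v)"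
    by blast+
qed

definition prodset :: "nat list set \<Rightarrow> nat list set \<Rightarrow> nat list set" where
  "prodset K L = {x @ y | x y. x \<in> K \<and> y \<in> L}"

definition regset :: "nat \<Rightarrow> nat \<Rightarrow> (nat list \<Rightarrow> nat) \<Rightarrow> (nat list \<Rightarrow> nat) \<Rightarrow> (nat \<times> nat) set \<Rightarrow> nat list set" where
  "regset a b G H C = {x @ y | x y. x \<in> arg_tuples a k \<and> y \<in> arg_tuples b k \<and> (G x, H y) \<in> C}"

definition Prods :: "(nat list \<Rightarrow> nat) \<Rightarrow> nat list set set \<Rightarrow> (nat list \<Rightarrow> nat) \<Rightarrow> nat list set set \<Rightarrow> (nat \<Rightarrow> nat \<Rightarrow> bool) \<Rightarrow> nat list set set" where
  "Prods G KG H KH good = {prodset K L | K L. K \<in> KG \<and> L \<in> KH \<and> good (cls G K) (cls H L)}"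

definition Regs :: "nat \<Rightarrow> nat \<Rightarrow> (nat list \<Rightarrow> nat) \<Rightarrow> (nat list \<Rightarrow> nat) \<Rightarrow> (nat \<times> nat) set set \<Rightarrow> nat list set set" where
  "Regs a b G H Cs = regset a b G H ` Cs"

lemma qg_surj_tuple: assumes "qg a k f" "1 \<le> a" "u < k" shows "\<exists>x\<in>arg_tuples a k. f x = u"
proof -
  have x0: "replicate a 0 \<in> arg_tuples a k" unfolding arg_tuples_def using assms(3) by auto
  obtain c where c: "c < k" "f ((replicate a 0)[0:=c]) = u" using qg_line_surj[OF assms(1) _ x0 assms(3)] assms(2) by auto
  thus ?thesis using arg_tuples_upd[OF x0 c(1)] by blast
qed

lemma app_eq_lens: "length x = length x' \<Longrightarrow> x @ y = x' @ y' \<Longrightarrow> x = x' \<and> y = y'"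
  by simp

lemma prod_pt: assumes sG: "struct a G KG" and sH: "struct b H KH" and gq: "goodok q good h"
  and K: "K \<in> KG" and L: "L \<in> KH" and gd: "good (cls G K) (cls H L)" and x: "x \<in> K" and y: "y \<in> L"
  shows "G x < 2*m" "H y < 2*m" "good (G x div 2) (H y div 2)" "q (G x) (H y) < 2*m"
    "q (G x) (H y) div 2 = h (cls G K) (cls H L)"
    "q (iota (G x)) (H y) = iota (q (G x) (H y))" "q (G x) (iota (H y)) = iota (q (G x) (H y))"
proof -
  show g: "G x < 2*m" using closedc_lt[OF struct_closed[OF sG K] x] .
  show hh: "H y < 2*m" using closedc_lt[OF struct_closed[OF sH L] y] .
  have c1: "G x div 2 = cls G K" using struct_cls[OF sG K x] .
  have c2: "H y div 2 = cls H L" using struct_cls[OF sH L y] .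
  show gd': "good (G x div 2) (H y div 2)" using gd c1 c2 by simp
  show "q (G x) (H y) < 2*m" using goodokD(1)[OF gq g hh gd'] .
  show "q (G x) (H y) div 2 = h (cls G K) (cls H L)" using goodokD(2)[OF gq g hh gd'] c1 c2 by simp
  show "q (iota (G x)) (H y) = iota (q (G x) (H y))" using goodokD(3)[OF gq g hh gd'] .
  show "q (G x) (iota (H y)) = iota (q (G x) (H y))" using goodokD(4)[OF gq g hh gd'] .
qed

lemma prodset_facts:
  assumes sG: "struct a G KG" and sH: "struct b H KH" and q: "latin q" and gq: "goodok q good h"
    and K: "K \<in> KG" and L: "L \<in> KH" and gd: "good (cls G K) (cls H L)"
  shows "prodset K L \<noteq> {}" "closedc (a+b) (cmp a q G H) (prodset K L)"
    "\<And>z. z \<in> prodset K L \<Longrightarrow> cmp a q G H z div 2 = h (cls G K) (cls H L)"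
proof -
  let ?F = "cmp a q G H"
  have cK: "closedc a G K" using struct_closed[OF sG K] .
  have cL: "closedc b H L" using struct_closed[OF sH L] .
  have lenK: "\<And>x. x \<in> K \<Longrightarrow> length x = a" using closedc_sub[OF cK] tuples_len by blast
  have lenL: "\<And>y. y \<in> L \<Longrightarrow> length y = b" using closedc_sub[OF cL] tuples_len by blast
  have F: "\<And>x y. x \<in> K \<Longrightarrow> ?F (x @ y) = q (G x) (H y)" using lenK cmp_app by blast
  note pp = prod_pt[OF sG sH gq K L gd]
  show "prodset K L \<noteq> {}" using struct_ne[OF sG K] struct_ne[OF sH L] unfolding prodset_def by blast
  show cl: "\<And>z. z \<in> prodset K L \<Longrightarrow> ?F z div 2 = h (cls G K) (cls H L)"
  proof -
    fix z assume "z \<in> prodset K L"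
    then obtain x y where z: "z = x @ y" "x \<in> K" "y \<in> L" unfolding prodset_def by blast
    show "?F z div 2 = h (cls G K) (cls H L)" using z F pp(5)[OF z(2,3)] by simp
  qed
  show "closedc (a+b) ?F (prodset K L)"
  proof (rule closedcI)
    show "prodset K L \<subseteq> arg_tuples (a+b) k"
      using closedc_sub[OF cK] closedc_sub[OF cL] tuples_app unfolding prodset_def by blast
  next
    fix z assume "z \<in> prodset K L"
    then obtain x y where z: "z = x @ y" "x \<in> K" "y \<in> L" unfolding prodset_def by blast
    show "?F z < 2*m" using z F pp(4)[OF z(2,3)] by simp
  next
    fix z i assume zi: "z \<in> prodset K L" and i: "i < a+b"
    then obtain x y where z: "z = x @ y" "x \<in> K" "y \<in> L" unfolding prodset_def by blast
    show "\<exists>c<k. z[i:=c] \<in> prodset K L \<and> ?F (z[i:=c]) = iota (?F z)"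
    proof (cases "i < a")
      case True
      obtain c where c: "c < k" "x[i:=c] \<in> K" "G (x[i:=c]) = iota (G x)"
        using closedc_partner[OF cK z(2) True] by blast
      have zc: "z[i:=c] = x[i:=c] @ y" using z(1) True lenK[OF z(2)] by (simp add: list_update_append1)
      have "?F (z[i:=c]) = q (iota (G x)) (H y)" using zc F[OF c(2)] c(3) by simp
      also have "\<dots> = iota (?F z)" using pp(6)[OF z(2,3)] F[OF z(2)] z(1) by simp
      finally show ?thesis using c(1) zc c(2) z(3) unfolding prodset_def by blast
    next
      case False
      have ib: "i - a < b" using i False by simp
      obtain c where c: "c < k" "y[i-a:=c] \<in> L" "H (y[i-a:=c]) = iota (H y)"
        using closedc_partner[OF cL z(3) ib] by blast
      have zc: "z[i:=c] = x @ y[i-a:=c]" using z(1) False lenK[OF z(2)] by (simp add: list_update_append)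
      have "?F (z[i:=c]) = q (G x) (iota (H y))" using zc F[OF z(2)] c(3) by simp
      also have "\<dots> = iota (?F z)" using pp(7)[OF z(2,3)] F[OF z(2)] z(1) by simp
      finally show ?thesis using c(1) zc c(2) z(2) unfolding prodset_def by blast
    qed
  qed
qed

lemma regset_facts:
  assumes sG: "struct a G KG" and sH: "struct b H KH" and q: "latin q" and cq: "cellsok q good Cs"
    and C: "C \<in> Cs" and a1: "1 \<le> a" and b1: "1 \<le> b"
  shows "regset a b G H C \<noteq> {}" "closedc (a+b) (cmp a q G H) (regset a b G H C)"
    "\<And>z. z \<in> regset a b G H C \<Longrightarrow> cmp a q G H z div 2 = clsC q C"
proof -
  let ?F = "cmp a q G H"
  have qG: "qg a k G" using struct_qg[OF sG] .
  have qH: "qg b k H" using struct_qg[OF sH] .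
  have cc: "cellclosed q C" using cellsok_closed[OF cq C] .
  have F: "\<And>x y. x \<in> arg_tuples a k \<Longrightarrow> ?F (x @ y) = q (G x) (H y)" using tuples_len cmp_app by blast
  show "regset a b G H C \<noteq> {}"
  proof -
    obtain u v where uv: "(u,v) \<in> C" using cellclosed_ne[OF cc] by auto
    have uk: "u < k" "v < k" using cellclosed_sub[OF cc uv] by auto
    obtain x where x: "x \<in> arg_tuples a k" "G x = u" using qg_surj_tuple[OF qG a1 uk(1)] by blast
    obtain y where y: "y \<in> arg_tuples b k" "H y = v" using qg_surj_tuple[OF qH b1 uk(2)] by blast
    show ?thesis using x y uv unfolding regset_def by blast
  qed
  show "\<And>z. z \<in> regset a b G H C \<Longrightarrow> ?F z div 2 = clsC q C"
  proof -
    fix z assume "z \<in> regset a b G H C"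
    then obtain x y where z: "z = x @ y" "x \<in> arg_tuples a k" "y \<in> arg_tuples b k" "(G x, H y) \<in> C"
      unfolding regset_def by blast
    show "?F z div 2 = clsC q C" using z F cellsok_cls[OF cq C z(4)] by simp
  qed
  show "closedc (a+b) ?F (regset a b G H C)"
  proof (rule closedcI)
    show "regset a b G H C \<subseteq> arg_tuples (a+b) k"
      using tuples_app unfolding regset_def by blast
  next
    fix z assume "z \<in> regset a b G H C"
    then obtain x y where z: "z = x @ y" "x \<in> arg_tuples a k" "y \<in> arg_tuples b k" "(G x, H y) \<in> C"
      unfolding regset_def by blast
    show "?F z < 2*m" using z F cellclosed_pt(1)[OF cc z(4)] by simp
  next
    fix z i assume zi: "z \<in> regset a b G H C" and i: "i < a+b"
    then obtain x y where z: "z = x @ y" "x \<in> arg_tuples a k" "y \<in> arg_tuples b k" "(G x, H y) \<in> C"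
      unfolding regset_def by blast
    have lx: "length x = a" using tuples_len[OF z(2)] .
    show "\<exists>c<k. z[i:=c] \<in> regset a b G H C \<and> ?F (z[i:=c]) = iota (?F z)"
    proof (cases "i < a")
      case True
      obtain u' where u': "u' < k" "(u', H y) \<in> C" "q u' (H y) = iota (q (G x) (H y))"
        using cellclosed_pt(2)[OF cc z(4)] by blast
      obtain c where c: "c < k" "G (x[i:=c]) = u'" using qg_line_surj[OF qG True z(2) u'(1)] by blast
      have xt: "x[i:=c] \<in> arg_tuples a k" using arg_tuples_upd[OF z(2) c(1)] .
      have zc: "z[i:=c] = x[i:=c] @ y" using z(1) True lx by (simp add: list_update_append1)
      have "?F (z[i:=c]) = iota (?F z)" using zc F[OF xt] F[OF z(2)] c(2) u'(3) z(1) by simp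
      moreover have "z[i:=c] \<in> regset a b G H C" using zc xt z(3) c(2) u'(2) unfolding regset_def by blast
      ultimately show ?thesis using c(1) by blast
    next
      case False
      have ib: "i - a < b" using i False by simp
      obtain v' where v': "v' < k" "(G x, v') \<in> C" "q (G x) v' = iota (q (G x) (H y))"
        using cellclosed_pt(3)[OF cc z(4)] by blast
      obtain c where c: "c < k" "H (y[i-a:=c]) = v'" using qg_line_surj[OF qH ib z(3) v'(1)] by blast
      have yt: "y[i-a:=c] \<in> arg_tuples b k" using arg_tuples_upd[OF z(3) c(1)] .
      have zc: "z[i:=c] = x @ y[i-a:=c]" using z(1) False lx by (simp add: list_update_append)
      have "?F (z[i:=c]) = iota (?F z)" using zc F[OF z(2)] c(2) v'(3) z(1) by simp
      moreover have "z[i:=c] \<in> regset a b G H C" using zc yt z(2) c(2) v'(2) unfolding regset_def by blast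
      ultimately show ?thesis using c(1) by blast
    qed
  qed
qed

lemma cls_const: assumes "X \<noteq> {}" "\<And>z. z \<in> X \<Longrightarrow> f z div 2 = r" shows "cls f X = r"
  unfolding cls_def using assms by (simp add: some_in_eq)

lemma comp_disj:
  assumes sG: "struct a G KG" and sH: "struct b H KH" and gq: "goodok q good h" and cq: "cellsok q good Cs"
    and X: "X \<in> Prods G KG H KH good \<union> Regs a b G H Cs" and X': "X' \<in> Prods G KG H KH good \<union> Regs a b G H Cs"
    and z: "z \<in> X" "z \<in> X'"
  shows "X = X'"
proof -
  have lenK: "\<And>K x. K \<in> KG \<Longrightarrow> x \<in> K \<Longrightarrow> length x = a"
    using struct_closed[OF sG] closedc_sub tuples_len by blast
  have pr: "\<And>K L C x y x' y'. K \<in> KG \<Longrightarrow> L \<in> KH \<Longrightarrow> good (cls G K) (cls H L) \<Longrightarrow> C \<in> Cs \<Longrightarrow> x \<in> K \<Longrightarrow> y \<in> L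
      \<Longrightarrow> x' \<in> arg_tuples a k \<Longrightarrow> (G x', H y') \<in> C \<Longrightarrow> x @ y = x' @ y' \<Longrightarrow> False"
  proof -
    fix K L C x y x' y' assume K: "K \<in> KG" and L: "L \<in> KH" and gd: "good (cls G K) (cls H L)" and C: "C \<in> Cs"
      and x: "x \<in> K" and y: "y \<in> L" and x': "x' \<in> arg_tuples a k" and c: "(G x', H y') \<in> C" and e: "x @ y = x' @ y'"
    have "x = x' \<and> y = y'" using app_eq_lens[OF _ e] lenK[OF K x] tuples_len[OF x'] by simp
    hence c': "(G x, H y) \<in> C" using c by simp
    note pp = prod_pt[OF sG sH gq K L gd x y]
    show False using cellsok_notgood[OF cq C c' pp(1,2,3)] .
  qed
  show ?thesis
  proof (cases "X \<in> Prods G KG H KH good")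
    case True
    then obtain K L where XKL: "X = prodset K L" "K \<in> KG" "L \<in> KH" "good (cls G K) (cls H L)"
      unfolding Prods_def by blast
    obtain x y where zxy: "z = x @ y" "x \<in> K" "y \<in> L" using z(1) XKL(1) unfolding prodset_def by blast
    show ?thesis
    proof (cases "X' \<in> Prods G KG H KH good")
      case True
      then obtain K' L' where XKL': "X' = prodset K' L'" "K' \<in> KG" "L' \<in> KH" "good (cls G K') (cls H L')"
        unfolding Prods_def by blast
      obtain x' y' where zxy': "z = x' @ y'" "x' \<in> K'" "y' \<in> L'" using z(2) XKL'(1) unfolding prodset_def by blast
      have "x = x' \<and> y = y'" using app_eq_lens[of x x' y y'] zxy zxy' lenK XKL XKL' by metis
      hence "K = K'" "L = L'" using struct_disj[OF sG XKL(2) XKL'(2)] struct_disj[OF sH XKL(3) XKL'(3)] zxy zxy' by auto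
      thus ?thesis using XKL XKL' by simp
    next
      case False
      then obtain C where C: "C \<in> Cs" "X' = regset a b G H C" using X' unfolding Regs_def by blast
      obtain x' y' where zr: "z = x' @ y'" "x' \<in> arg_tuples a k" "(G x', H y') \<in> C"
        using z(2) C(2) unfolding regset_def by blast
      show ?thesis using pr[OF XKL(2,3,4) C(1) zxy(2,3) zr(2,3)] zxy(1) zr(1) by simp
    qed
  next
    case False
    then obtain C where C: "C \<in> Cs" "X = regset a b G H C" using X unfolding Regs_def by blast
    obtain x y where zr: "z = x @ y" "x \<in> arg_tuples a k" "(G x, H y) \<in> C"
      using z(1) C(2) unfolding regset_def by blast
    show ?thesis
    proof (cases "X' \<in> Prods G KG H KH good")
      case True
      then obtain K' L' where XKL': "X' = prodset K' L'" "K' \<in> KG" "L' \<in> KH" "good (cls G K') (cls H L')"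
        unfolding Prods_def by blast
      obtain x' y' where zxy': "z = x' @ y'" "x' \<in> K'" "y' \<in> L'" using z(2) XKL'(1) unfolding prodset_def by blast
      show ?thesis using pr[OF XKL'(2,3,4) C(1) zxy'(2,3) zr(2,3)] zxy'(1) zr(1) by simp
    next
      case False
      then obtain C' where C': "C' \<in> Cs" "X' = regset a b G H C'" using X' unfolding Regs_def by blast
      obtain x' y' where zr': "z = x' @ y'" "x' \<in> arg_tuples a k" "(G x', H y') \<in> C'"
        using z(2) C'(2) unfolding regset_def by blast
      have "x = x' \<and> y = y'" using app_eq_lens[of x x' y y'] zr zr' tuples_len by metis
      hence "C = C'" using cellsok_disj[OF cq C(1) C'(1) zr(3)] zr'(3) by simp
      thus ?thesis using C C' by simp
    qed
  qed
qed

lemma cmp_struct: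
  assumes sG: "struct a G KG" and sH: "struct b H KH" and q: "latin q" and gq: "goodok q good h"
    and cq: "cellsok q good Cs" and a1: "1 \<le> a" and b1: "1 \<le> b"
  shows "struct (a+b) (cmp a q G H) (Prods G KG H KH good \<union> Regs a b G H Cs)"
proof (rule structI)
  let ?F = "cmp a q G H"
  show "qg (a+b) k ?F" using cmp_qg[OF struct_qg[OF sG] struct_qg[OF sH] q] .
  show "\<And>X X' z. X \<in> Prods G KG H KH good \<union> Regs a b G H Cs \<Longrightarrow> X' \<in> Prods G KG H KH good \<union> Regs a b G H Cs
     \<Longrightarrow> z \<in> X \<Longrightarrow> z \<in> X' \<Longrightarrow> X = X'"
    using comp_disj[OF sG sH gq cq] by blast
next
  let ?F = "cmp a q G H"
  fix X
  assume X: "X \<in> Prods G KG H KH good \<union> Regs a b G H Cs"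
  show "X \<noteq> {}" "closedc (a+b) ?F X" "\<And>z. z \<in> X \<Longrightarrow> ?F z div 2 = cls ?F X"
  proof -
    have "(X \<noteq> {} \<and> closedc (a+b) ?F X) \<and> (\<forall>z\<in>X. ?F z div 2 = cls ?F X)"
    proof (cases "X \<in> Prods G KG H KH good")
      case True
      then obtain K L where XKL: "X = prodset K L" "K \<in> KG" "L \<in> KH" "good (cls G K) (cls H L)"
        unfolding Prods_def by blast
      note pf = prodset_facts[OF sG sH q gq XKL(2,3,4)]
      have "cls ?F X = h (cls G K) (cls H L)" using cls_const[OF pf(1)] pf(3) XKL(1) by simp
      thus ?thesis using pf XKL(1) by simp
    next
      case False
      then obtain C where C: "C \<in> Cs" "X = regset a b G H C" using X unfolding Regs_def by blast
      note rf = regset_facts[OF sG sH q cq C(1) a1 b1]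
      have "cls ?F X = clsC q C" using cls_const[OF rf(1)] rf(3) C(2) by simp
      thus ?thesis using rf C(2) by simp
    qed
    thus "X \<noteq> {}" "closedc (a+b) ?F X" "\<And>z. z \<in> X \<Longrightarrow> ?F z div 2 = cls ?F X" by auto
  qed
qed


lemma prod_not_reg:
  assumes sG: "struct a G KG" and sH: "struct b H KH" and gq: "goodok q good h" and cq: "cellsok q good Cs"
    and K: "K \<in> KG" and L: "L \<in> KH" and gd: "good (cls G K) (cls H L)" and C: "C \<in> Cs"
    and z: "z \<in> prodset K L" "z \<in> regset a b G H C"
  shows False
proof -
  have lenK: "\<And>x. x \<in> K \<Longrightarrow> length x = a"
    using struct_closed[OF sG K] closedc_sub tuples_len by blast
  obtain x y where zxy: "z = x @ y" "x \<in> K" "y \<in> L" using z(1) unfolding prodset_def by blast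
  obtain x' y' where zr: "z = x' @ y'" "x' \<in> arg_tuples a k" "(G x', H y') \<in> C"
    using z(2) unfolding regset_def by blast
  have "x = x' \<and> y = y'" using app_eq_lens[of x x' y y'] zxy zr lenK tuples_len by metis
  hence c': "(G x, H y) \<in> C" using zr(3) by simp
  note pp = prod_pt[OF sG sH gq K L gd zxy(2,3)]
  show False using cellsok_notgood[OF cq C c' pp(1,2,3)] .
qed

lemma cellsok_finite: assumes "cellsok q good Cs" shows "finite Cs"
proof -
  have "Cs \<subseteq> Pow ({0..<k} \<times> {0..<k})" using cellsok_closed[OF assms] unfolding cellclosed_def by blast
  thus ?thesis using finite_subset by blast
qed

lemma cmp_count:
  assumes sG: "struct a G KG" and sH: "struct b H KH" and q: "latin q" and gq: "goodok q good h"
    and cq: "cellsok q good Cs" and a1: "1 \<le> a" and b1: "1 \<le> b"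
  shows "card {(K,L) \<in> KG \<times> KH. good (cls G K) (cls H L) \<and> h (cls G K) (cls H L) = r}
        + card {C \<in> Cs. clsC q C = r}
      \<le> card {X \<in> Prods G KG H KH good \<union> Regs a b G H Cs. cls (cmp a q G H) X = r}"
proof -
  let ?F = "cmp a q G H"
  let ?P = "{(K,L) \<in> KG \<times> KH. good (cls G K) (cls H L) \<and> h (cls G K) (cls H L) = r}"
  let ?R = "{C \<in> Cs. clsC q C = r}"
  let ?A = "(\<lambda>(K,L). prodset K L) ` ?P"
  let ?B = "regset a b G H ` ?R"
  have sF: "struct (a+b) ?F (Prods G KG H KH good \<union> Regs a b G H Cs)" using cmp_struct[OF assms] .
  have finT: "finite {X \<in> Prods G KG H KH good \<union> Regs a b G H Cs. cls ?F X = r}"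
    using struct_finite[OF sF] by simp
  have lenK: "\<And>K x. K \<in> KG \<Longrightarrow> x \<in> K \<Longrightarrow> length x = a"
    using struct_closed[OF sG] closedc_sub tuples_len by blast
  have finP: "finite ?P"
    by (rule finite_subset[of _ "KG \<times> KH"]) (auto simp: struct_finite[OF sG] struct_finite[OF sH])
  have finR: "finite ?R" using cellsok_finite[OF cq] by simp
  have injA: "inj_on (\<lambda>(K,L). prodset K L) ?P"
  proof (rule inj_onI)
    fix KL KL' assume P1: "KL \<in> ?P" and P2: "KL' \<in> ?P" and e: "(\<lambda>(K,L). prodset K L) KL = (\<lambda>(K,L). prodset K L) KL'"
    obtain K L where KL: "KL = (K,L)" "K \<in> KG" "L \<in> KH" using P1 by auto
    obtain K' L' where KL': "KL' = (K',L')" "K' \<in> KG" "L' \<in> KH" using P2 by auto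
    obtain x where x: "x \<in> K" using struct_ne[OF sG KL(2)] by blast
    obtain y where y: "y \<in> L" using struct_ne[OF sH KL(3)] by blast
    have "x @ y \<in> prodset K L" using x y unfolding prodset_def by blast
    hence "x @ y \<in> prodset K' L'" using e KL KL' by simp
    then obtain x' y' where e2: "x @ y = x' @ y'" "x' \<in> K'" "y' \<in> L'" unfolding prodset_def by blast
    have "x = x' \<and> y = y'" using app_eq_lens[OF _ e2(1)] lenK[OF KL(2) x] lenK[OF KL'(2) e2(2)] by simp
    hence "K = K'" "L = L'" using struct_disj[OF sG KL(2) KL'(2) x] struct_disj[OF sH KL(3) KL'(3) y] e2 by auto
    thus "KL = KL'" using KL KL' by simp
  qed
  have injB: "inj_on (regset a b G H) ?R"
  proof (rule inj_onI)
    fix C C' assume C: "C \<in> ?R" and C': "C' \<in> ?R" and e: "regset a b G H C = regset a b G H C'"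
    have "regset a b G H C \<noteq> {}" using regset_facts(1)[OF sG sH q cq _ a1 b1] C by blast
    then obtain z where z: "z \<in> regset a b G H C" by blast
    then obtain x y where zr: "z = x @ y" "x \<in> arg_tuples a k" "(G x, H y) \<in> C" unfolding regset_def by blast
    obtain x' y' where zr': "z = x' @ y'" "x' \<in> arg_tuples a k" "(G x', H y') \<in> C'"
      using z e unfolding regset_def by blast
    have "x = x' \<and> y = y'" using app_eq_lens[of x x' y y'] zr zr' tuples_len by metis
    thus "C = C'" using cellsok_disj[OF cq _ _ zr(3)] C C' zr'(3) by auto
  qed
  have disjAB: "?A \<inter> ?B = {}"
  proof (rule ccontr)
    assume "?A \<inter> ?B \<noteq> {}"
    then obtain K L C where KL: "(K,L) \<in> ?P" and C: "C \<in> ?R" and e: "prodset K L = regset a b G H C" by auto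
    have "prodset K L \<noteq> {}" using KL prodset_facts(1)[OF sG sH q gq] by auto
    then obtain z where z: "z \<in> prodset K L" by blast
    have z2: "z \<in> regset a b G H C" using z e by simp
    have KL2: "K \<in> KG" "L \<in> KH" "good (cls G K) (cls H L)" using KL by auto
    have C2: "C \<in> Cs" using C by auto
    show False using prod_not_reg[OF sG sH gq cq KL2 C2 z z2] .
  qed
  have sub: "?A \<union> ?B \<subseteq> {X \<in> Prods G KG H KH good \<union> Regs a b G H Cs. cls ?F X = r}"
  proof
    fix X assume "X \<in> ?A \<union> ?B"
    thus "X \<in> {X \<in> Prods G KG H KH good \<union> Regs a b G H Cs. cls ?F X = r}"
    proof
      assume "X \<in> ?A"
      then obtain K L where KL: "(K,L) \<in> ?P" "X = prodset K L" by auto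
      have K: "K \<in> KG" "L \<in> KH" "good (cls G K) (cls H L)" using KL(1) by auto
      note pf = prodset_facts[OF sG sH q gq K]
      have "cls ?F X = r" using cls_const[OF pf(1)] pf(3) KL by auto
      moreover have "X \<in> Prods G KG H KH good" using K KL(2) unfolding Prods_def by blast
      ultimately show ?thesis by simp
    next
      assume "X \<in> ?B"
      then obtain C where C: "C \<in> ?R" "X = regset a b G H C" by auto
      note rf = regset_facts[OF sG sH q cq _ a1 b1]
      have "cls ?F X = r" using cls_const[OF rf(1)] rf(3) C by auto
      moreover have "X \<in> Regs a b G H Cs" using C unfolding Regs_def by auto
      ultimately show ?thesis by simp
    qed
  qed
  have "card ?P + card ?R = card ?A + card ?B" using card_image[OF injA] card_image[OF injB] by simp
  also have "\<dots> = card (?A \<union> ?B)" using card_Un_disjoint[OF _ _ disjAB] finP finR by simp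
  also have "\<dots> \<le> card {X \<in> Prods G KG H KH good \<union> Regs a b G H Cs. cls ?F X = r}"
    using card_mono[OF finT sub] .
  finally show ?thesis .
qed

lemma pairs_count:
  assumes fG: "finite KG" and fH: "finite KH" and I: "finite I"
    and Isub: "\<And>p c. (p,c) \<in> I \<Longrightarrow> good p c \<and> h p c = r"
  shows "(\<Sum>(p,c)\<in>I. card {K \<in> KG. cls G K = p} * card {L \<in> KH. cls H L = c})
     \<le> card {(K,L) \<in> KG \<times> KH. good (cls G K) (cls H L) \<and> h (cls G K) (cls H L) = r}"
proof -
  let ?S = "\<lambda>pc. {K \<in> KG. cls G K = fst pc} \<times> {L \<in> KH. cls H L = snd pc}"
  have "(\<Sum>(p,c)\<in>I. card {K \<in> KG. cls G K = p} * card {L \<in> KH. cls H L = c}) = (\<Sum>pc\<in>I. card (?S pc))"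
    by (rule sum.cong) (auto simp: card_cartesian_product)
  also have "\<dots> = card (\<Union>pc\<in>I. ?S pc)"
    by (rule card_UN_disjoint[symmetric]) (use I fG fH in auto)
  also have "\<dots> \<le> card {(K,L) \<in> KG \<times> KH. good (cls G K) (cls H L) \<and> h (cls G K) (cls H L) = r}"
  proof (rule card_mono)
    show "finite {(K,L) \<in> KG \<times> KH. good (cls G K) (cls H L) \<and> h (cls G K) (cls H L) = r}"
      by (rule finite_subset[of _ "KG \<times> KH"]) (auto simp: fG fH)
    show "(\<Union>pc\<in>I. ?S pc) \<subseteq> {(K,L) \<in> KG \<times> KH. good (cls G K) (cls H L) \<and> h (cls G K) (cls H L) = r}"
      using Isub by auto
  qed
  finally show ?thesis .
qed


lemma sw_cls: assumes s: "struct n f Ks" and S: "S \<subseteq> Ks" and K: "K \<in> Ks" shows "cls (sw f S) K = cls f K"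
proof -
  have ne: "(SOME z. z \<in> K) \<in> K" using struct_ne[OF s K] by (simp add: some_in_eq)
  have lt: "f (SOME z. z \<in> K) < 2*m" using closedc_lt[OF struct_closed[OF s K] ne] .
  show ?thesis unfolding cls_def using sw_in_comp[OF s S K ne] iota_div[OF lt] by simp
qed

lemma Prods_sw: assumes sG: "struct a G KG" and sH: "struct b H KH" and w: "\<omega> \<subseteq> KG" and c: "\<chi> \<subseteq> KH"
  shows "Prods (sw G \<omega>) KG (sw H \<chi>) KH good = Prods G KG H KH good"
proof -
  have e1: "\<And>K. K \<in> KG \<Longrightarrow> cls (sw G \<omega>) K = cls G K" using sw_cls[OF sG w] .
  have e2: "\<And>L. L \<in> KH \<Longrightarrow> cls (sw H \<chi>) L = cls H L" using sw_cls[OF sH c] .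
  show ?thesis unfolding Prods_def
  proof (rule Collect_cong)
    fix X show "(\<exists>K L. X = prodset K L \<and> K \<in> KG \<and> L \<in> KH \<and> good (cls (sw G \<omega>) K) (cls (sw H \<chi>) L))
       = (\<exists>K L. X = prodset K L \<and> K \<in> KG \<and> L \<in> KH \<and> good (cls G K) (cls H L))"
      using e1 e2 by metis
  qed
qed

lemma cellsok_empty: "cellsok q good {}" by (simp add: cellsok_def)

lemma Regs_empty: "Regs a b G H {} = {}" by (simp add: Regs_def)

lemma notin_comps: assumes s: "struct n f Ks" and x: "f x = 2*m" shows "x \<notin> \<Union>Ks"
proof
  assume "x \<in> \<Union>Ks"
  then obtain K where "K \<in> Ks" "x \<in> K" by blast
  hence "f x < 2*m" using closedc_lt[OF struct_closed[OF s]] by blast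
  thus False using x by simp
qed

lemma top_Q:
  assumes sG: "struct a G KG" and sH: "struct b H KH" and q: "latin q" and gq: "goodok q good h"
    and a1: "1 \<le> a" and b1: "1 \<le> b"
  shows "2 ^ (card KG + card KH + card (Prods G KG H KH good)) \<le> Q (a+b) k"
proof -
  let ?P = "Prods G KG H KH good"
  let ?F = "\<lambda>\<omega> \<chi>. cmp a q (sw G \<omega>) (sw H \<chi>)"
  let ?Phi = "\<lambda>(\<omega>,\<chi>,S). sw (?F \<omega> \<chi>) S"
  let ?A = "Pow KG \<times> Pow KH \<times> Pow ?P"
  have fG: "finite KG" using struct_finite[OF sG] .
  have fH: "finite KH" using struct_finite[OF sH] .
  have sF: "\<And>\<omega> \<chi>. \<omega> \<subseteq> KG \<Longrightarrow> \<chi> \<subseteq> KH \<Longrightarrow> struct (a+b) (?F \<omega> \<chi>) ?P"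
  proof -
    fix \<omega> \<chi> assume w: "\<omega> \<subseteq> KG" and c: "\<chi> \<subseteq> KH"
    have "struct (a+b) (?F \<omega> \<chi>) (Prods (sw G \<omega>) KG (sw H \<chi>) KH good \<union> Regs a b (sw G \<omega>) (sw H \<chi>) {})"
      using cmp_struct[OF sw_struct[OF sG w] sw_struct[OF sH c] q gq cellsok_empty a1 b1] .
    thus "struct (a+b) (?F \<omega> \<chi>) ?P" using Prods_sw[OF sG sH w c] Regs_empty by simp
  qed
  have fP: "finite ?P" using struct_finite[OF sF[of "{}" "{}"]] by simp
  have mk: "2*m < k" using k_def by simp
  obtain x0 where x0: "x0 \<in> arg_tuples a k" "G x0 = 2*m" using qg_surj_tuple[OF struct_qg[OF sG] a1 mk] by blast
  obtain y0 where y0: "y0 \<in> arg_tuples b k" "H y0 = 2*m" using qg_surj_tuple[OF struct_qg[OF sH] b1 mk] by blast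
  have x0n: "x0 \<notin> \<Union>KG" using notin_comps[OF sG x0(2)] .
  have y0n: "y0 \<notin> \<Union>KH" using notin_comps[OF sH y0(2)] .
  have lenK: "\<And>K x. K \<in> KG \<Longrightarrow> x \<in> K \<Longrightarrow> length x = a"
    using struct_closed[OF sG] closedc_sub tuples_len by blast
  have lenL: "\<And>L y. L \<in> KH \<Longrightarrow> y \<in> L \<Longrightarrow> length y = b"
    using struct_closed[OF sH] closedc_sub tuples_len by blast
  have P1: "\<And>y. x0 @ y \<notin> \<Union>?P"
  proof
    fix y assume "x0 @ y \<in> \<Union>?P"
    then obtain K L where KL: "K \<in> KG" "x0 @ y \<in> prodset K L" unfolding Prods_def by blast
    then obtain x y' where e: "x0 @ y = x @ y'" "x \<in> K" unfolding prodset_def by blast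
    have "x0 = x" using app_eq_lens[OF _ e(1)] lenK[OF KL(1) e(2)] tuples_len[OF x0(1)] by simp
    thus False using x0n KL(1) e(2) by blast
  qed
  have P2: "\<And>x. length x = a \<Longrightarrow> x @ y0 \<notin> \<Union>?P"
  proof
    fix x assume lx: "length x = a" and "x @ y0 \<in> \<Union>?P"
    then obtain K L where KL: "K \<in> KG" "L \<in> KH" "x @ y0 \<in> prodset K L" unfolding Prods_def by blast
    then obtain x' y' where e: "x @ y0 = x' @ y'" "x' \<in> K" "y' \<in> L" unfolding prodset_def by blast
    have "y0 = y'" using app_eq_lens[OF _ e(1)] lenK[OF KL(1) e(2)] lx by simp
    thus False using y0n KL(2) e(3) by blast
  qed
  have inj: "inj_on (\<lambda>x. restrict (?Phi x) (arg_tuples (a+b) k)) ?A"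
  proof (rule inj_onI)
    fix t t' assume t: "t \<in> ?A" and t': "t' \<in> ?A"
      and e: "restrict (?Phi t) (arg_tuples (a+b) k) = restrict (?Phi t') (arg_tuples (a+b) k)"
    obtain \<omega> \<chi> S where tt: "t = (\<omega>,\<chi>,S)" "\<omega> \<subseteq> KG" "\<chi> \<subseteq> KH" "S \<subseteq> ?P" using t by auto
    obtain \<omega>' \<chi>' S' where tt': "t' = (\<omega>',\<chi>',S')" "\<omega>' \<subseteq> KG" "\<chi>' \<subseteq> KH" "S' \<subseteq> ?P" using t' by auto
    have ev: "\<And>z. z \<in> arg_tuples (a+b) k \<Longrightarrow> sw (?F \<omega> \<chi>) S z = sw (?F \<omega>' \<chi>') S' z"
    proof -
      fix z assume z: "z \<in> arg_tuples (a+b) k"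
      have "restrict (?Phi t) (arg_tuples (a+b) k) z = restrict (?Phi t') (arg_tuples (a+b) k) z" using e by simp
      thus "sw (?F \<omega> \<chi>) S z = sw (?F \<omega>' \<chi>') S' z" using z tt(1) tt'(1) by simp
    qed
    have swG: "\<And>\<omega>. \<omega> \<subseteq> KG \<Longrightarrow> sw G \<omega> x0 = 2*m"
    proof -
      fix \<omega> assume "\<omega> \<subseteq> KG" hence "x0 \<notin> \<Union>\<omega>" using x0n by blast
      thus "sw G \<omega> x0 = 2*m" unfolding sw_def using x0(2) by simp
    qed
    have swH: "\<And>\<chi>. \<chi> \<subseteq> KH \<Longrightarrow> sw H \<chi> y0 = 2*m"
    proof -
      fix \<chi> assume "\<chi> \<subseteq> KH" hence "y0 \<notin> \<Union>\<chi>" using y0n by blast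
      thus "sw H \<chi> y0 = 2*m" unfolding sw_def using y0(2) by simp
    qed
    have nS: "\<And>S y. S \<subseteq> ?P \<Longrightarrow> x0 @ y \<notin> \<Union>S" using P1 by blast
    have nS2: "\<And>S x. S \<subseteq> ?P \<Longrightarrow> length x = a \<Longrightarrow> x @ y0 \<notin> \<Union>S" using P2 by blast
    have hy: "\<And>y. y \<in> arg_tuples b k \<Longrightarrow> sw H \<chi> y = sw H \<chi>' y"
    proof -
      fix y assume y: "y \<in> arg_tuples b k"
      have zt: "x0 @ y \<in> arg_tuples (a+b) k" using tuples_app[OF x0(1) y] .
      have l0: "length x0 = a" using tuples_len[OF x0(1)] .
      have r1: "\<And>\<omega> \<chi> S. \<omega> \<subseteq> KG \<Longrightarrow> S \<subseteq> ?P \<Longrightarrow> sw (?F \<omega> \<chi>) S (x0 @ y) = q (2*m) (sw H \<chi> y)"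
      proof -
        fix \<omega> \<chi> S assume w: "\<omega> \<subseteq> KG" and S: "S \<subseteq> ?P"
        have "sw (?F \<omega> \<chi>) S (x0 @ y) = ?F \<omega> \<chi> (x0 @ y)" unfolding sw_def using nS[OF S] by simp
        also have "\<dots> = q (sw G \<omega> x0) (sw H \<chi> y)" by (rule cmp_app[OF l0])
        also have "\<dots> = q (2*m) (sw H \<chi> y)" using swG[OF w] by simp
        finally show "sw (?F \<omega> \<chi>) S (x0 @ y) = q (2*m) (sw H \<chi> y)" .
      qed
      have "q (2*m) (sw H \<chi> y) = q (2*m) (sw H \<chi>' y)"
        using ev[OF zt] r1[OF tt(2,4)] r1[OF tt'(2,4)] by simp
      moreover have "sw H \<chi> y < k" "sw H \<chi>' y < k"
        using qg_lt[OF sw_qg[OF sH tt(3)] y] qg_lt[OF sw_qg[OF sH tt'(3)] y] .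
      ultimately show "sw H \<chi> y = sw H \<chi>' y"
        using bij_betw_imp_inj_on[OF latin_row[OF q mk]] unfolding inj_on_def by auto
    qed
    have "restrict (sw H \<chi>) (arg_tuples b k) = restrict (sw H \<chi>') (arg_tuples b k)"
      using hy by (simp add: restrict_def fun_eq_iff)
    hence c: "\<chi> = \<chi>'" using sw_inj[OF sH] tt(3) tt'(3) unfolding inj_on_def by blast
    have gx: "\<And>x. x \<in> arg_tuples a k \<Longrightarrow> sw G \<omega> x = sw G \<omega>' x"
    proof -
      fix x assume x: "x \<in> arg_tuples a k"
      have zt: "x @ y0 \<in> arg_tuples (a+b) k" using tuples_app[OF x y0(1)] .
      have l0: "length x = a" using tuples_len[OF x] .
      have r2: "\<And>\<omega> \<chi> S. \<chi> \<subseteq> KH \<Longrightarrow> S \<subseteq> ?P \<Longrightarrow> sw (?F \<omega> \<chi>) S (x @ y0) = q (sw G \<omega> x) (2*m)"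
      proof -
        fix \<omega> \<chi> S assume c: "\<chi> \<subseteq> KH" and S: "S \<subseteq> ?P"
        have "sw (?F \<omega> \<chi>) S (x @ y0) = ?F \<omega> \<chi> (x @ y0)" unfolding sw_def using nS2[OF S l0] by simp
        also have "\<dots> = q (sw G \<omega> x) (sw H \<chi> y0)" by (rule cmp_app[OF l0])
        also have "\<dots> = q (sw G \<omega> x) (2*m)" using swH[OF c] by simp
        finally show "sw (?F \<omega> \<chi>) S (x @ y0) = q (sw G \<omega> x) (2*m)" .
      qed
      have "q (sw G \<omega> x) (2*m) = q (sw G \<omega>' x) (2*m)"
        using ev[OF zt] r2[OF tt(3,4)] r2[OF tt'(3,4)] c by simp
      moreover have "sw G \<omega> x < k" "sw G \<omega>' x < k"
        using qg_lt[OF sw_qg[OF sG tt(2)] x] qg_lt[OF sw_qg[OF sG tt'(2)] x] .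
      ultimately show "sw G \<omega> x = sw G \<omega>' x"
        using bij_betw_imp_inj_on[OF latin_col[OF q mk]] unfolding inj_on_def by auto
    qed
    have "restrict (sw G \<omega>) (arg_tuples a k) = restrict (sw G \<omega>') (arg_tuples a k)"
      using gx by (simp add: restrict_def fun_eq_iff)
    hence w: "\<omega> = \<omega>'" using sw_inj[OF sG] tt(2) tt'(2) unfolding inj_on_def by blast
    have "restrict (sw (?F \<omega> \<chi>) S) (arg_tuples (a+b) k) = restrict (sw (?F \<omega> \<chi>) S') (arg_tuples (a+b) k)"
      using ev w c by (simp add: restrict_def fun_eq_iff)
    hence "S = S'" using sw_inj[OF sF[OF tt(2,3)]] tt(4) tt'(4) unfolding inj_on_def by blast
    thus "t = t'" using tt tt' w c by simp
  qed
  have qgs: "\<And>t. t \<in> ?A \<Longrightarrow> qg (a+b) k (?Phi t)"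
  proof -
    fix t assume "t \<in> ?A"
    then obtain \<omega> \<chi> S where tt: "t = (\<omega>,\<chi>,S)" "\<omega> \<subseteq> KG" "\<chi> \<subseteq> KH" "S \<subseteq> ?P" by auto
    show "qg (a+b) k (?Phi t)" using sw_qg[OF sF[OF tt(2,3)] tt(4)] tt(1) by simp
  qed
  have "card ?A \<le> Q (a+b) k" using Q_ge_card_image[OF inj _ qgs] fG fH fP by simp
  moreover have "card ?A = 2 ^ (card KG + card KH + card ?P)"
    using fG fH fP by (simp add: card_cartesian_product card_Pow power_add)
  ultimately show ?thesis by simp
qed


lemma prods_card: assumes sG: "struct a G KG" and sH: "struct b H KH"
  shows "card {(K,L) \<in> KG \<times> KH. good (cls G K) (cls H L)} \<le> card (Prods G KG H KH good)"
proof -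
  let ?P = "{(K,L) \<in> KG \<times> KH. good (cls G K) (cls H L)}"
  have lenK: "\<And>K x. K \<in> KG \<Longrightarrow> x \<in> K \<Longrightarrow> length x = a"
    using struct_closed[OF sG] closedc_sub tuples_len by blast
  have injA: "inj_on (\<lambda>(K,L). prodset K L) ?P"
  proof (rule inj_onI)
    fix KL KL' assume P1: "KL \<in> ?P" and P2: "KL' \<in> ?P" and e: "(\<lambda>(K,L). prodset K L) KL = (\<lambda>(K,L). prodset K L) KL'"
    obtain K L where KL: "KL = (K,L)" "K \<in> KG" "L \<in> KH" using P1 by auto
    obtain K' L' where KL': "KL' = (K',L')" "K' \<in> KG" "L' \<in> KH" using P2 by auto
    obtain x where x: "x \<in> K" using struct_ne[OF sG KL(2)] by blast
    obtain y where y: "y \<in> L" using struct_ne[OF sH KL(3)] by blast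
    have "x @ y \<in> prodset K L" using x y unfolding prodset_def by blast
    hence "x @ y \<in> prodset K' L'" using e KL KL' by simp
    then obtain x' y' where e2: "x @ y = x' @ y'" "x' \<in> K'" "y' \<in> L'" unfolding prodset_def by blast
    have "x = x' \<and> y = y'" using app_eq_lens[OF _ e2(1)] lenK[OF KL(2) x] lenK[OF KL'(2) e2(2)] by simp
    hence "K = K'" "L = L'" using struct_disj[OF sG KL(2) KL'(2) x] struct_disj[OF sH KL(3) KL'(3) y] e2 by auto
    thus "KL = KL'" using KL KL' by simp
  qed
  have sub: "(\<lambda>(K,L). prodset K L) ` ?P \<subseteq> Prods G KG H KH good" unfolding Prods_def by auto
  have fin: "finite (Prods G KG H KH good)"
  proof -
    have "Prods G KG H KH good \<subseteq> (\<lambda>(K,L). prodset K L) ` (KG \<times> KH)" unfolding Prods_def by auto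
    thus ?thesis using struct_finite[OF sG] struct_finite[OF sH] finite_subset by blast
  qed
  show ?thesis using card_mono[OF fin sub] card_image[OF injA] by simp
qed

definition f1 :: "nat list \<Rightarrow> nat" where "f1 xs = hd xs"

definition U1 :: "nat list set set" where "U1 = (\<lambda>p. {[2*p], [2*p+1]}) ` {..<m}"

lemma tuples1: "xs \<in> arg_tuples 1 k \<longleftrightarrow> (\<exists>x<k. xs = [x])"
  unfolding arg_tuples_def by (auto simp: length_Suc_conv)

lemma unary_struct: "struct 1 f1 U1"
proof (rule structI)
  show "qg 1 k f1" unfolding qg_def
  proof (intro conjI ballI allI impI)
    fix xs assume "xs \<in> arg_tuples 1 k" thus "f1 xs < k" using tuples1 unfolding f1_def by auto
  next
    fix i xs assume i: "i < (1::nat)" and xs: "xs \<in> arg_tuples 1 k"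
    obtain x where "xs = [x]" using xs tuples1 by auto
    hence "(\<lambda>a. f1 (xs[i:=a])) = id" using i unfolding f1_def by auto
    thus "bij_betw (\<lambda>a. f1 (xs[i:=a])) {0..<k} {0..<k}" by simp
  qed
next
  fix K assume "K \<in> U1"
  then obtain p where p: "p < m" "K = {[2*p], [2*p+1]}" unfolding U1_def by auto
  show "K \<noteq> {}" using p by simp
  have lt: "2*p+1 < 2*m" using p by simp
  have i0: "iota (2*p) = 2*p+1" using iota_cases(1)[of "2*p"] lt by simp
  have i1: "iota (2*p+1) = 2*p" using iota_cases(2)[of "2*p+1"] lt by simp
  show "closedc 1 f1 K"
  proof (rule closedcI)
    show "K \<subseteq> arg_tuples 1 k" using p k_def tuples1 by auto
    fix z assume "z \<in> K" thus "f1 z < 2*m" using p lt unfolding f1_def by auto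
  next
    fix z i assume z: "z \<in> K" and i: "i < (1::nat)"
    have i0': "i = 0" using i by simp
    show "\<exists>a<k. z[i:=a] \<in> K \<and> f1 (z[i:=a]) = iota (f1 z)"
    proof (cases "z = [2*p]")
      case True thus ?thesis using i0 i0' p k_def lt unfolding f1_def by (intro exI[of _ "2*p+1"]) auto
    next
      case False hence "z = [2*p+1]" using z p by auto
      thus ?thesis using i1 i0' p k_def lt unfolding f1_def by (intro exI[of _ "2*p"]) auto
    qed
  qed
  have "cls f1 K = p" by (rule cls_const) (use p in \<open>auto simp: f1_def\<close>)
  thus "\<And>z. z \<in> K \<Longrightarrow> f1 z div 2 = cls f1 K" using p unfolding f1_def by auto
next
  fix K K' z assume "K \<in> U1" "K' \<in> U1" "z \<in> K" "z \<in> K'"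
  then obtain p p' where pp: "K = {[2*p], [2*p+1]}" "K' = {[2*p'], [2*p'+1]}" "z \<in> K" "z \<in> K'"
    unfolding U1_def by auto
  have "hd z div 2 = p" using pp(1,3) by auto
  moreover have "hd z div 2 = p'" using pp(2,4) by auto
  ultimately show "K = K'" using pp(1,2) by simp
qed

lemma unary_cnt: assumes "p < m" shows "card {K \<in> U1. cls f1 K = p} = 1"
proof -
  have c: "\<And>p'. p' < m \<Longrightarrow> cls f1 {[2*p'], [2*p'+1]} = p'" by (rule cls_const) (auto simp: f1_def)
  have "{K \<in> U1. cls f1 K = p} = {{[2*p], [2*p+1]}}"
  proof
    show "{K \<in> U1. cls f1 K = p} \<subseteq> {{[2*p], [2*p+1]}}" unfolding U1_def using c by auto
    show "{{[2*p], [2*p+1]}} \<subseteq> {K \<in> U1. cls f1 K = p}" unfolding U1_def using c assms by auto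
  qed
  thus ?thesis by simp
qed

lemma unary_card: "card U1 = m"
proof -
  have "inj_on (\<lambda>p. {[2*p], [2*p+1]}) {..<m}"
  proof (rule inj_onI)
    fix p p' :: nat assume e: "{[2*p], [2*p+1]} = {[2*p'], [2*p'+1]}"
    have "[2*p] \<in> {[2*p'], [2*p'+1]}" using e by blast
    hence "2*p = 2*p' \<or> 2*p = 2*p'+1" by simp
    thus "p = p'" by presburger
  qed
  hence "card ((\<lambda>p. {[2*p], [2*p+1]}) ` {..<m}) = m" using card_image by fastforce
  thus ?thesis unfolding U1_def .
qed

end



context ctx begin

lemma iota_formula: "v < 2*m \<Longrightarrow> iota v = 2*(v div 2) + (1 - v mod 2)"
  unfolding iota_def by (auto elim!: evenE oddE)

end

fun eG :: "nat \<Rightarrow> nat \<Rightarrow> nat" where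
  "eG mm 0 = 0" | "eG mm (Suc 0) = 1" | "eG mm (Suc (Suc 0)) = mm"
| "eG mm (Suc (Suc (Suc n))) = mm * (mm - 1) * eG mm (Suc n)"

lemma eG_formula: "1 \<le> n \<Longrightarrow> mm * eG mm n = (mm-1)^((n-1) div 2) * mm^((n+2) div 2)"
proof (induction mm n rule: eG.induct)
  case (4 mm n)
  show ?case
  proof (cases n)
    case 0 thus ?thesis by (simp add: numeral_3_eq_3)
  next
    case (Suc n')
    have ih: "mm * eG mm (Suc n) = (mm-1)^((Suc n - 1) div 2) * mm^((Suc n + 2) div 2)" using 4 by simp
    have e1: "(Suc (Suc (Suc n)) - 1) div 2 = Suc ((Suc n - 1) div 2)" by simp
    have e2: "(Suc (Suc (Suc n)) + 2) div 2 = Suc ((Suc n + 2) div 2)" by simp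
    have "mm * eG mm (Suc (Suc (Suc n))) = ((mm-1) * mm) * (mm * eG mm (Suc n))"
      by (simp only: eG.simps mult.assoc mult.left_commute)
    also have "\<dots> = ((mm-1) * mm) * ((mm-1)^((Suc n - 1) div 2) * mm^((Suc n + 2) div 2))" using ih by simp
    also have "\<dots> = (mm-1)^(Suc ((Suc n - 1) div 2)) * mm^(Suc ((Suc n + 2) div 2))"
      by (simp only: power_Suc mult.assoc mult.left_commute)
    finally show ?thesis unfolding e1 e2 .
  qed
qed (simp_all add: power2_eq_square)

locale ctxH = ctx +
  fixes H :: "nat \<Rightarrow> nat \<Rightarrow> nat" and tau :: "nat \<Rightarrow> nat"
  assumes H_lt: "p < m \<Longrightarrow> c < m \<Longrightarrow> H p c < m"
    and H_rinj: "p < m \<Longrightarrow> c < m \<Longrightarrow> c' < m \<Longrightarrow> H p c = H p c' \<Longrightarrow> c = c'"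
    and H_cinj: "p < m \<Longrightarrow> p' < m \<Longrightarrow> c < m \<Longrightarrow> H p c = H p' c \<Longrightarrow> p = p'"
    and tau_lt: "p < m \<Longrightarrow> tau p < m"
    and tau_inj: "p < m \<Longrightarrow> p' < m \<Longrightarrow> tau p = tau p' \<Longrightarrow> p = p'"
    and mu_inj: "p < m \<Longrightarrow> p' < m \<Longrightarrow> H p (tau p) = H p' (tau p') \<Longrightarrow> p = p'"
begin

definition mu :: "nat \<Rightarrow> nat" where "mu p = H p (tau p)"

lemma mu_lt: "p < m \<Longrightarrow> mu p < m" unfolding mu_def using H_lt tau_lt by simp

lemma surj_of_inj: assumes "\<And>x. x < m \<Longrightarrow> f x < m" and "\<And>x y. x < m \<Longrightarrow> y < m \<Longrightarrow> f x = f y \<Longrightarrow> x = y"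
  and "r < m" shows "\<exists>x<m. f x = r"
proof -
  have inj: "inj_on f {..<m}" using assms(2) unfolding inj_on_def by auto
  have "f ` {..<m} \<subseteq> {..<m}" using assms(1) by auto
  hence "f ` {..<m} = {..<m}" using endo_inj_surj[OF _ _ inj] by simp
  thus ?thesis using assms(3) by (metis imageE lessThan_iff)
qed

lemma mu_surj: "r < m \<Longrightarrow> \<exists>p<m. mu p = r"
  using surj_of_inj[of mu] mu_lt mu_inj unfolding mu_def by blast

lemma H_rsurj: "p < m \<Longrightarrow> r < m \<Longrightarrow> \<exists>c<m. H p c = r"
  using surj_of_inj[of "H p"] H_lt H_rinj by blast

lemma H_csurj: "c < m \<Longrightarrow> r < m \<Longrightarrow> \<exists>p<m. H p c = r"
  using surj_of_inj[of "\<lambda>p. H p c"] H_lt H_cinj by blast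

lemma tau_surj: "c < m \<Longrightarrow> \<exists>p<m. tau p = c"
  using surj_of_inj[of tau] tau_lt tau_inj by blast

definition tinv :: "nat \<Rightarrow> nat" where "tinv c = (SOME p. p < m \<and> tau p = c)"

lemma tinv: "c < m \<Longrightarrow> tinv c < m \<and> tau (tinv c) = c"
  unfolding tinv_def using tau_surj by (rule someI_ex) auto

lemma tinv_tau: "p < m \<Longrightarrow> tinv (tau p) = p"
  using tinv[OF tau_lt] tau_inj tau_lt by metis

definition B :: "nat \<Rightarrow> nat \<Rightarrow> nat" where
  "B u v = (if u < 2*m \<and> v < 2*m then
      (if v div 2 \<noteq> tau (u div 2) then 2 * H (u div 2) (v div 2) + (if u mod 2 = v mod 2 then 0 else 1)
       else if u mod 2 = v mod 2 then 2 * mu (u div 2) + u mod 2 else 2*m)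
    else if u < 2*m then 2 * mu (u div 2) + (1 - u mod 2)
    else if v < 2*m then 2 * mu (tinv (v div 2)) + (1 - v mod 2)
    else 2*m)"

lemma dm2: "(b::nat) < 2 \<Longrightarrow> (2*a+b) div 2 = a \<and> (2*a+b) mod 2 = b" by auto

lemma two_lt: "x < m \<Longrightarrow> (e::nat) \<le> 1 \<Longrightarrow> 2*x + e < 2*m" by linarith

lemma B2: assumes "a < m" "b < 2" "c < m" "d < 2"
  shows "B (2*a+b) (2*c+d) = (if c \<noteq> tau a then 2 * H a c + (if b = d then 0 else 1)
           else if b = d then 2 * mu a + b else 2*m)"
proof -
  have "2*a+b < 2*m" "2*c+d < 2*m" using assms by linarith+
  thus ?thesis unfolding B_def using dm2[OF assms(2), of a] dm2[OF assms(4), of c] by simp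
qed

lemma B3: assumes "a < m" "b < 2" shows "B (2*a+b) (2*m) = 2 * mu a + (1-b)"
proof -
  have "2*a+b < 2*m" using assms by linarith
  thus ?thesis unfolding B_def using dm2[OF assms(2), of a] by simp
qed

lemma B4: assumes "c < m" "d < 2" shows "B (2*m) (2*c+d) = 2 * mu (tinv c) + (1-d)"
proof -
  have "2*c+d < 2*m" using assms by linarith
  thus ?thesis unfolding B_def using dm2[OF assms(2), of c] by simp
qed

lemma B5: "B (2*m) (2*m) = 2*m" unfolding B_def by simp

lemma decomp: "u < k \<Longrightarrow> u = 2*m \<or> (\<exists>a<m. \<exists>b<2. u = 2*a+b)"
proof -
  assume u: "u < k"
  show ?thesis
  proof (cases "u < 2*m")
    case True
    have "u = 2*(u div 2) + u mod 2" by simp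
    moreover have "u div 2 < m" "u mod 2 < 2" using True by auto
    ultimately show ?thesis by blast
  next
    case False thus ?thesis using u k_def by simp
  qed
qed

lemma B_lt: assumes "u < k" "v < k" shows "B u v < k"
proof -
  have kk: "2*m < k" using k_def by simp
  have hm: "\<And>a c e. a < m \<Longrightarrow> c < m \<Longrightarrow> (e::nat) \<le> 1 \<Longrightarrow> 2 * H a c + e < k"
  proof -
    fix a c e :: nat assume "a < m" "c < m" "e \<le> 1"
    hence "2 * H a c + e < 2*m" using two_lt[OF H_lt] by blast
    thus "2 * H a c + e < k" using kk by linarith
  qed
  have mm: "\<And>a e. a < m \<Longrightarrow> (e::nat) \<le> 1 \<Longrightarrow> 2 * mu a + e < k"
  proof -
    fix a e :: nat assume "a < m" "e \<le> 1"
    hence "2 * mu a + e < 2*m" using two_lt[OF mu_lt] by blast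
    thus "2 * mu a + e < k" using kk by linarith
  qed
  show ?thesis
  proof (cases "u = 2*m")
    case True
    show ?thesis
    proof (cases "v = 2*m")
      case True thus ?thesis using \<open>u = 2*m\<close> B5 kk by simp
    next
      case False
      then obtain c d where cd: "c < m" "d < 2" "v = 2*c+d" using decomp[OF assms(2)] by blast
      show ?thesis using B4[OF cd(1,2)] \<open>u = 2*m\<close> cd(3) mm[OF conjunct1[OF tinv[OF cd(1)]]] by simp
    qed
  next
    case False
    then obtain a b where ab: "a < m" "b < 2" "u = 2*a+b" using decomp[OF assms(1)] by blast
    show ?thesis
    proof (cases "v = 2*m")
      case True thus ?thesis using B3[OF ab(1,2)] ab(3) mm[OF ab(1)] by simp
    next
      case False
      then obtain c d where cd: "c < m" "d < 2" "v = 2*c+d" using decomp[OF assms(2)] by blast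
      show ?thesis using B2[OF ab(1,2) cd(1,2)] ab(3) cd(3) hm[OF ab(1) cd(1)] mm[OF ab(1)] ab(2) kk by auto
    qed
  qed
qed


lemma xor_fix: "(b::nat) < 2 \<Longrightarrow> (e::nat) < 2 \<Longrightarrow> (if b = (if e = 0 then b else 1-b) then 0 else 1) = e"
  by (cases "e = 0"; cases "b = 0") auto

lemma xor_fix2: "(b::nat) < 2 \<Longrightarrow> (e::nat) < 2 \<Longrightarrow> (if (if e = 0 then b else 1-b) = b then 0 else 1) = e"
  by (cases "e = 0"; cases "b = 0") auto

lemma lt2m_k: "x < 2*m \<Longrightarrow> x < k" using k_def by simp

lemma B_row_surj: assumes u: "u < k" and w: "w < k" shows "\<exists>v<k. B u v = w"
proof -
  have kk: "2*m < k" using k_def by simp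
  have pk: "\<And>c d. c < m \<Longrightarrow> (d::nat) < 2 \<Longrightarrow> 2*c+d < k" using k_def by linarith
  consider (inf) "u = 2*m" | (fin) a b where "a < m" "b < 2" "u = 2*a+b" using decomp[OF u] by blast
  thus ?thesis
  proof cases
    case inf
    consider (winf) "w = 2*m" | (wfin) r e where "r < m" "e < 2" "w = 2*r+e" using decomp[OF w] by blast
    thus ?thesis
    proof cases
      case winf thus ?thesis using inf B5 kk by blast
    next
      case wfin
      obtain a where a: "a < m" "mu a = r" using mu_surj[OF wfin(1)] by blast
      have "B u (2*tau a + (1-e)) = w"
        using B4[OF tau_lt[OF a(1)], of "1-e"] inf wfin tinv_tau[OF a(1)] a by simp
      moreover have "2*tau a + (1-e) < k" using pk[OF tau_lt[OF a(1)], of "1-e"] by simp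
      ultimately show ?thesis by blast
    qed
  next
    case fin
    consider (winf) "w = 2*m" | (wfin) r e where "r < m" "e < 2" "w = 2*r+e" using decomp[OF w] by blast
    thus ?thesis
    proof cases
      case winf
      have nb: "b \<noteq> 1 - b" "1 - b < 2" using fin(2) by presburger+
      have "B u (2*tau a + (1-b)) = w" using B2[OF fin(1,2) tau_lt[OF fin(1)] nb(2)] fin(3) winf nb(1) by simp
      moreover have "2*tau a + (1-b) < k" using pk[OF tau_lt[OF fin(1)], of "1-b"] by simp
      ultimately show ?thesis by blast
    next
      case wfin
      show ?thesis
      proof (cases "r = mu a")
        case True
        show ?thesis
        proof (cases "e = b")
          case True
          have "B u (2*tau a + b) = w" using B2[OF fin(1,2) tau_lt[OF fin(1)] fin(2)] fin wfin True \<open>r = mu a\<close> by simp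
          moreover have "2*tau a + b < k" using pk[OF tau_lt[OF fin(1)] fin(2)] .
          ultimately show ?thesis by blast
        next
          case False
          have "e = 1 - b" using False fin(2) wfin(2) by auto
          hence "B u (2*m) = w" using B3[OF fin(1,2)] fin wfin \<open>r = mu a\<close> by simp
          thus ?thesis using kk by blast
        qed
      next
        case False
        obtain c where c: "c < m" "H a c = r" using H_rsurj[OF fin(1) wfin(1)] by blast
        have ct: "c \<noteq> tau a" using c False unfolding mu_def by auto
        let ?d = "if e = 0 then b else 1-b"
        have d2: "?d < 2" using fin(2) by auto
        have "B u (2*c + ?d) = w"
          using B2[OF fin(1,2) c(1) d2] ct c(2) fin(3) wfin(3) xor_fix[OF fin(2) wfin(2)] by simp
        moreover have "2*c + ?d < k" using pk[OF c(1) d2] .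
        ultimately show ?thesis by blast
      qed
    qed
  qed
qed

lemma B_col_surj: assumes v: "v < k" and w: "w < k" shows "\<exists>u<k. B u v = w"
proof -
  have kk: "2*m < k" using k_def by simp
  have pk: "\<And>c d. c < m \<Longrightarrow> (d::nat) < 2 \<Longrightarrow> 2*c+d < k" using k_def by linarith
  consider (inf) "v = 2*m" | (fin) c d where "c < m" "d < 2" "v = 2*c+d" using decomp[OF v] by blast
  thus ?thesis
  proof cases
    case inf
    consider (winf) "w = 2*m" | (wfin) r e where "r < m" "e < 2" "w = 2*r+e" using decomp[OF w] by blast
    thus ?thesis
    proof cases
      case winf thus ?thesis using inf B5 kk by blast
    next
      case wfin
      obtain a where a: "a < m" "mu a = r" using mu_surj[OF wfin(1)] by blast
      have "B (2*a + (1-e)) v = w" using B3[OF a(1), of "1-e"] inf wfin a by simp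
      moreover have "2*a + (1-e) < k" using pk[OF a(1), of "1-e"] by simp
      ultimately show ?thesis by blast
    qed
  next
    case fin
    define a0 where "a0 = tinv c"
    have a0: "a0 < m" "tau a0 = c" using tinv[OF fin(1)] unfolding a0_def by auto
    consider (winf) "w = 2*m" | (wfin) r e where "r < m" "e < 2" "w = 2*r+e" using decomp[OF w] by blast
    thus ?thesis
    proof cases
      case winf
      have nb: "1 - d \<noteq> d" "1 - d < 2" using fin(2) by presburger+
      have "B (2*a0 + (1-d)) v = w" using B2[OF a0(1) nb(2) fin(1,2)] a0(2) fin(3) winf nb(1) by simp
      moreover have "2*a0 + (1-d) < k" using pk[OF a0(1), of "1-d"] by simp
      ultimately show ?thesis by blast
    next
      case wfin
      show ?thesis
      proof (cases "r = mu a0")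
        case True
        show ?thesis
        proof (cases "e = d")
          case True
          have "B (2*a0 + d) v = w" using B2[OF a0(1) fin(2) fin(1) fin(2)] a0 fin wfin True \<open>r = mu a0\<close> by simp
          moreover have "2*a0 + d < k" using pk[OF a0(1) fin(2)] .
          ultimately show ?thesis by blast
        next
          case False
          have "e = 1 - d" using False fin(2) wfin(2) by auto
          hence "B (2*m) v = w" using B4[OF fin(1,2)] fin wfin \<open>r = mu a0\<close> a0_def by simp
          thus ?thesis using kk by blast
        qed
      next
        case False
        obtain a where a: "a < m" "H a c = r" using H_csurj[OF fin(1) wfin(1)] by blast
        have ct: "c \<noteq> tau a"
        proof
          assume "c = tau a"
          hence "a = a0" using tinv_tau[OF a(1)] a0_def by simp
          thus False using a False a0(2) unfolding mu_def by simp
        qed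
        let ?b = "if e = 0 then d else 1-d"
        have b2: "?b < 2" using fin(2) by auto
        have "B (2*a + ?b) v = w"
          using B2[OF a(1) b2 fin(1,2)] ct a(2) fin(3) wfin(3) xor_fix2[OF fin(2) wfin(2)] by simp
        moreover have "2*a + ?b < k" using pk[OF a(1) b2] .
        ultimately show ?thesis by blast
      qed
    qed
  qed
qed

lemma bij_of_image: "finite A \<Longrightarrow> f ` A = A \<Longrightarrow> bij_betw f A A"
  unfolding bij_betw_def by (simp add: eq_card_imp_inj_on)

lemma B_latin: "latin B"
  unfolding latin_def
proof (intro conjI allI impI)
  fix u assume u: "u < k"
  have "B u ` {0..<k} = {0..<k}"
  proof
    show "B u ` {0..<k} \<subseteq> {0..<k}" using B_lt[OF u] by auto
    show "{0..<k} \<subseteq> B u ` {0..<k}" using B_row_surj[OF u] by force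
  qed
  thus "bij_betw (B u) {0..<k} {0..<k}" by (simp add: bij_of_image)
next
  fix v assume v: "v < k"
  have "(\<lambda>u. B u v) ` {0..<k} = {0..<k}"
  proof
    show "(\<lambda>u. B u v) ` {0..<k} \<subseteq> {0..<k}" using B_lt[OF _ v] by auto
    show "{0..<k} \<subseteq> (\<lambda>u. B u v) ` {0..<k}" using B_col_surj[OF v] by force
  qed
  thus "bij_betw (\<lambda>u. B u v) {0..<k} {0..<k}" by (simp add: bij_of_image)
qed


lemma iota_pair: "x < m \<Longrightarrow> iota (2*x) = 2*x+1" "x < m \<Longrightarrow> iota (2*x+1) = 2*x"
  using iota_formula[of "2*x"] iota_formula[of "2*x+1"] by auto

lemma B_goodok: "goodok B (\<lambda>p c. c \<noteq> tau p) H"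
  unfolding goodok_def
proof (intro allI impI)
  fix u v assume u: "u < 2*m" and v: "v < 2*m" and g: "v div 2 \<noteq> tau (u div 2)"
  define a b c d where "a = u div 2" "b = u mod 2" "c = v div 2" "d = v mod 2"
  have ab: "a < m" "b < 2" "u = 2*a+b" using u unfolding a_b_c_d_def by auto
  have cd: "c < m" "d < 2" "v = 2*c+d" using v unfolding a_b_c_d_def by auto
  have ct: "c \<noteq> tau a" using g unfolding a_b_c_d_def by simp
  have Buv: "B u v = 2 * H a c + (if b = d then 0 else 1)" using B2[OF ab(1,2) cd(1,2)] ab(3) cd(3) ct by simp
  have hlt: "H a c < m" using H_lt[OF ab(1) cd(1)] .
  have iu: "iota u = 2*a + (1-b)" using iota_formula[OF u] unfolding a_b_c_d_def by simp
  have iv: "iota v = 2*c + (1-d)" using iota_formula[OF v] unfolding a_b_c_d_def by simp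
  have b1: "1 - b < 2" "1 - d < 2" by auto
  have B1: "B (iota u) v = 2 * H a c + (if 1-b = d then 0 else 1)" using B2[OF ab(1) b1(1) cd(1,2)] iu cd(3) ct by simp
  have B2': "B u (iota v) = 2 * H a c + (if b = 1-d then 0 else 1)" using B2[OF ab(1,2) cd(1) b1(2)] iv ab(3) ct by simp
  have lt: "B u v < 2*m" using Buv two_lt[OF hlt] by simp
  have i1: "iota (B u v) = 2 * H a c + (if b = d then 1 else 0)"
    using Buv iota_pair[OF hlt] by auto
  show "B u v < 2*m \<and> B u v div 2 = H (u div 2) (v div 2) \<and> B (iota u) v = iota (B u v) \<and> B u (iota v) = iota (B u v)"
  proof (intro conjI)
    show "B u v < 2*m" using lt .
    show "B u v div 2 = H (u div 2) (v div 2)" using Buv unfolding a_b_c_d_def by simp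
    show "B (iota u) v = iota (B u v)" using B1 i1 ab(2) cd(2) by (cases "b = 0"; cases "d = 0") auto
    show "B u (iota v) = iota (B u v)" using B2' i1 ab(2) cd(2) by (cases "b = 0"; cases "d = 0") auto
  qed
qed


definition Cell :: "nat \<Rightarrow> (nat \<times> nat) set" where
  "Cell a = {(2*a, 2*tau a), (2*a+1, 2*tau a+1), (2*a, 2*m), (2*a+1, 2*m), (2*m, 2*tau a), (2*m, 2*tau a+1)}"

definition CsB :: "(nat \<times> nat) set set" where "CsB = Cell ` {..<m}"

lemma cell_vals: assumes a: "a < m"
  shows "B (2*a) (2*tau a) = 2*mu a" "B (2*a+1) (2*tau a+1) = 2*mu a+1"
    "B (2*a) (2*m) = 2*mu a+1" "B (2*a+1) (2*m) = 2*mu a"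
    "B (2*m) (2*tau a) = 2*mu a+1" "B (2*m) (2*tau a+1) = 2*mu a"
proof -
  have t: "tau a < m" using tau_lt[OF a] .
  have ti: "tinv (tau a) = a" using tinv_tau[OF a] .
  show "B (2*a) (2*tau a) = 2*mu a" using B2[OF a _ t, of 0 0] by simp
  show "B (2*a+1) (2*tau a+1) = 2*mu a+1" using B2[OF a _ t, of 1 1] by simp
  show "B (2*a) (2*m) = 2*mu a+1" using B3[OF a, of 0] by simp
  show "B (2*a+1) (2*m) = 2*mu a" using B3[OF a, of 1] by simp
  show "B (2*m) (2*tau a) = 2*mu a+1" using B4[OF t, of 0] ti by simp
  show "B (2*m) (2*tau a+1) = 2*mu a" using B4[OF t, of 1] ti by simp
qed

lemma cell_closed: assumes a: "a < m" shows "cellclosed B (Cell a)"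
  unfolding cellclosed_def
proof (intro conjI allI impI)
  have t: "tau a < m" using tau_lt[OF a] .
  have mu: "mu a < m" using mu_lt[OF a] .
  have kk: "2*m < k" "2*a+1 < k" "2*tau a+1 < k" using k_def a t by auto
  show "Cell a \<subseteq> {0..<k} \<times> {0..<k}" unfolding Cell_def using kk by auto
  show "Cell a \<noteq> {}" unfolding Cell_def by simp
  note cv = cell_vals[OF a]
  note ip = iota_pair[OF mu]
  have lt: "2*mu a+1 < 2*m" using mu by simp
  fix u v assume uv: "(u,v) \<in> Cell a"
  hence cases: "(u,v) = (2*a, 2*tau a) \<or> (u,v) = (2*a+1, 2*tau a+1) \<or> (u,v) = (2*a, 2*m) \<or> (u,v) = (2*a+1, 2*m)
     \<or> (u,v) = (2*m, 2*tau a) \<or> (u,v) = (2*m, 2*tau a+1)" unfolding Cell_def by blast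
  show "B u v < 2*m" using cases cv lt by auto
  show "\<exists>u'<k. (u',v) \<in> Cell a \<and> B u' v = iota (B u v)"
  proof -
    { assume "(u,v) = (2*a, 2*tau a)" hence ?thesis using cv ip kk unfolding Cell_def by (intro exI[of _ "2*m"]) auto }
    moreover { assume "(u,v) = (2*a+1, 2*tau a+1)" hence ?thesis using cv ip kk unfolding Cell_def by (intro exI[of _ "2*m"]) auto }
    moreover { assume "(u,v) = (2*a, 2*m)" hence ?thesis using cv ip kk unfolding Cell_def by (intro exI[of _ "2*a+1"]) auto }
    moreover { assume "(u,v) = (2*a+1, 2*m)" hence ?thesis using cv ip kk unfolding Cell_def by (intro exI[of _ "2*a"]) auto }
    moreover { assume "(u,v) = (2*m, 2*tau a)" hence ?thesis using cv ip kk unfolding Cell_def by (intro exI[of _ "2*a"]) auto }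
    moreover { assume "(u,v) = (2*m, 2*tau a+1)" hence ?thesis using cv ip kk unfolding Cell_def by (intro exI[of _ "2*a+1"]) auto }
    ultimately show ?thesis using cases by blast
  qed
  show "\<exists>v'<k. (u,v') \<in> Cell a \<and> B u v' = iota (B u v)"
  proof -
    { assume "(u,v) = (2*a, 2*tau a)" hence ?thesis using cv ip kk unfolding Cell_def by (intro exI[of _ "2*m"]) auto }
    moreover { assume "(u,v) = (2*a+1, 2*tau a+1)" hence ?thesis using cv ip kk unfolding Cell_def by (intro exI[of _ "2*m"]) auto }
    moreover { assume "(u,v) = (2*a, 2*m)" hence ?thesis using cv ip kk unfolding Cell_def by (intro exI[of _ "2*tau a"]) auto }
    moreover { assume "(u,v) = (2*a+1, 2*m)" hence ?thesis using cv ip kk unfolding Cell_def by (intro exI[of _ "2*tau a+1"]) auto }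
    moreover { assume "(u,v) = (2*m, 2*tau a)" hence ?thesis using cv ip kk unfolding Cell_def by (intro exI[of _ "2*tau a+1"]) auto }
    moreover { assume "(u,v) = (2*m, 2*tau a+1)" hence ?thesis using cv ip kk unfolding Cell_def by (intro exI[of _ "2*tau a"]) auto }
    ultimately show ?thesis using cases by blast
  qed
qed

lemma cell_cls: assumes a: "a < m" and uv: "(u,v) \<in> Cell a" shows "B u v div 2 = mu a"
proof -
  have "(u,v) = (2*a, 2*tau a) \<or> (u,v) = (2*a+1, 2*tau a+1) \<or> (u,v) = (2*a, 2*m) \<or> (u,v) = (2*a+1, 2*m)
     \<or> (u,v) = (2*m, 2*tau a) \<or> (u,v) = (2*m, 2*tau a+1)" using uv unfolding Cell_def by blast
  thus ?thesis using cell_vals[OF a] by auto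
qed

lemma clsC_Cell: assumes a: "a < m" shows "clsC B (Cell a) = mu a"
proof -
  have "(SOME c. c \<in> Cell a) \<in> Cell a" by (rule someI_ex) (auto simp: Cell_def)
  then obtain u v where "(SOME c. c \<in> Cell a) = (u,v)" "(u,v) \<in> Cell a" by (metis surj_pair)
  thus ?thesis unfolding clsC_def using cell_cls[OF a] by simp
qed

lemma cell_idx: assumes a: "a < m" and uv: "(u,v) \<in> Cell a"
  shows "(u < 2*m \<and> u div 2 = a) \<or> (v < 2*m \<and> v div 2 = tau a)"
proof -
  have t: "tau a < m" using tau_lt[OF a] .
  have "(u,v) = (2*a, 2*tau a) \<or> (u,v) = (2*a+1, 2*tau a+1) \<or> (u,v) = (2*a, 2*m) \<or> (u,v) = (2*a+1, 2*m)
     \<or> (u,v) = (2*m, 2*tau a) \<or> (u,v) = (2*m, 2*tau a+1)" using uv unfolding Cell_def by blast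
  thus ?thesis using a t by auto
qed

lemma B_cellsok: "cellsok B (\<lambda>p c. c \<noteq> tau p) CsB"
  unfolding cellsok_def
proof (intro conjI ballI allI impI)
  fix C assume "C \<in> CsB"
  then obtain a where a: "a < m" "C = Cell a" unfolding CsB_def by auto
  show "cellclosed B C" using cell_closed[OF a(1)] a(2) by simp
  fix u v assume uv: "(u,v) \<in> C"
  show "B u v div 2 = clsC B C" using cell_cls[OF a(1)] clsC_Cell[OF a(1)] uv a(2) by simp
  show "\<not> (u < 2*m \<and> v < 2*m \<and> v div 2 \<noteq> tau (u div 2))"
  proof -
    have "(u,v) = (2*a, 2*tau a) \<or> (u,v) = (2*a+1, 2*tau a+1) \<or> (u,v) = (2*a, 2*m) \<or> (u,v) = (2*a+1, 2*m)
       \<or> (u,v) = (2*m, 2*tau a) \<or> (u,v) = (2*m, 2*tau a+1)" using uv a(2) unfolding Cell_def by blast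
    thus ?thesis by auto
  qed
next
  fix C C' c assume C: "C \<in> CsB" and C': "C' \<in> CsB" and c: "c \<in> C" "c \<in> C'"
  obtain a where a: "a < m" "C = Cell a" using C unfolding CsB_def by auto
  obtain a' where a': "a' < m" "C' = Cell a'" using C' unfolding CsB_def by auto
  obtain u v where uv: "c = (u,v)" by (metis surj_pair)
  have i1: "(u < 2*m \<and> u div 2 = a) \<or> (v < 2*m \<and> v div 2 = tau a)" using cell_idx[OF a(1)] c(1) a(2) uv by simp
  have i2: "(u < 2*m \<and> u div 2 = a') \<or> (v < 2*m \<and> v div 2 = tau a')" using cell_idx[OF a'(1)] c(2) a'(2) uv by simp
  have "a = a'"
  proof (cases "u < 2*m")
    case True
    have "u div 2 = a"
    proof -
      have "u \<in> {2*a, 2*a+1, 2*m}" using c(1) a(2) uv unfolding Cell_def by auto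
      thus ?thesis using True by auto
    qed
    moreover have "u div 2 = a'"
    proof -
      have "u \<in> {2*a', 2*a'+1, 2*m}" using c(2) a'(2) uv unfolding Cell_def by auto
      thus ?thesis using True by auto
    qed
    ultimately show ?thesis by simp
  next
    case False
    hence "v div 2 = tau a" "v div 2 = tau a'" using i1 i2 by auto
    thus ?thesis using tau_inj[OF a(1) a'(1)] by simp
  qed
  thus "C = C'" using a a' by simp
qed


definition col :: "nat \<Rightarrow> nat \<Rightarrow> nat" where "col p r = (SOME c. c < m \<and> H p c = r)"

lemma col: "p < m \<Longrightarrow> r < m \<Longrightarrow> col p r < m \<and> H p (col p r) = r"
  unfolding col_def by (rule someI_ex) (use H_rsurj in auto)

definition Ir :: "nat \<Rightarrow> (nat \<times> nat) set" where
  "Ir r = (\<lambda>p. (p, col p r)) ` {p. p < m \<and> mu p \<noteq> r}"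

lemma Ir_card: assumes r: "r < m" shows "card (Ir r) = m - 1"
proof -
  obtain p0 where p0: "p0 < m" "mu p0 = r" using mu_surj[OF r] by blast
  have e: "{p. p < m \<and> mu p \<noteq> r} = {..<m} - {p0}"
    using p0 mu_inj unfolding mu_def by auto
  have "inj_on (\<lambda>p. (p, col p r)) {p. p < m \<and> mu p \<noteq> r}" by (rule inj_onI) auto
  hence "card (Ir r) = card {p. p < m \<and> mu p \<noteq> r}" unfolding Ir_def by (rule card_image)
  also have "\<dots> = m - 1" using e p0 by simp
  finally show ?thesis .
qed

lemma Ir_good: assumes r: "r < m" and pc: "(p,c) \<in> Ir r" shows "c \<noteq> tau p \<and> H p c = r"
proof -
  have p: "p < m" "mu p \<noteq> r" "c = col p r" using pc unfolding Ir_def by auto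
  have "H p c = r" using col[OF p(1) r] p(3) by simp
  moreover have "c \<noteq> tau p" using p(2) calculation unfolding mu_def by auto
  ultimately show ?thesis by simp
qed

lemma CsB_cls: assumes r: "r < m" shows "1 \<le> card {C \<in> CsB. clsC B C = r}"
proof -
  obtain p0 where p0: "p0 < m" "mu p0 = r" using mu_surj[OF r] by blast
  have "Cell p0 \<in> {C \<in> CsB. clsC B C = r}" using clsC_Cell[OF p0(1)] p0 unfolding CsB_def by auto
  moreover have "finite {C \<in> CsB. clsC B C = r}" unfolding CsB_def by simp
  ultimately show ?thesis by (metis One_nat_def Suc_leI card_gt_0_iff empty_iff)
qed

lemma stepG:
  assumes sG: "struct a G KG" and sH: "struct b F KF" and a1: "1 \<le> a" and b1: "1 \<le> b"
    and cG: "\<And>r. r < m \<Longrightarrow> g \<le> card {K \<in> KG. cls G K = r}"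
    and cF: "\<And>r. r < m \<Longrightarrow> h \<le> card {L \<in> KF. cls F L = r}"
  shows "struct (a+b) (cmp a B G F) (Prods G KG F KF (\<lambda>p c. c \<noteq> tau p) \<union> Regs a b G F CsB)"
    "\<And>r. r < m \<Longrightarrow> (m-1)*g*h + 1 \<le> card {X \<in> Prods G KG F KF (\<lambda>p c. c \<noteq> tau p) \<union> Regs a b G F CsB. cls (cmp a B G F) X = r}"
proof -
  show "struct (a+b) (cmp a B G F) (Prods G KG F KF (\<lambda>p c. c \<noteq> tau p) \<union> Regs a b G F CsB)"
    using cmp_struct[OF sG sH B_latin B_goodok B_cellsok a1 b1] .
  fix r assume r: "r < m"
  have cnt: "card {(K,L) \<in> KG \<times> KF. (\<lambda>p c. c \<noteq> tau p) (cls G K) (cls F L) \<and> H (cls G K) (cls F L) = r}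
        + card {C \<in> CsB. clsC B C = r}
      \<le> card {X \<in> Prods G KG F KF (\<lambda>p c. c \<noteq> tau p) \<union> Regs a b G F CsB. cls (cmp a B G F) X = r}"
    using cmp_count[OF sG sH B_latin B_goodok B_cellsok a1 b1] .
  have finI: "finite (Ir r)" unfolding Ir_def by simp
  have pc: "(\<Sum>(p,c)\<in>Ir r. card {K \<in> KG. cls G K = p} * card {L \<in> KF. cls F L = c})
     \<le> card {(K,L) \<in> KG \<times> KF. (\<lambda>p c. c \<noteq> tau p) (cls G K) (cls F L) \<and> H (cls G K) (cls F L) = r}"
    by (rule pairs_count[OF struct_finite[OF sG] struct_finite[OF sH] finI]) (use Ir_good[OF r] in auto)
  have lb: "\<And>pc. pc \<in> Ir r \<Longrightarrow> g * h \<le> (case pc of (p,c) \<Rightarrow> card {K \<in> KG. cls G K = p} * card {L \<in> KF. cls F L = c})"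
  proof -
    fix pc assume pc: "pc \<in> Ir r"
    obtain p c where pcd: "pc = (p,c)" by (metis surj_pair)
    have p0: "p < m" "c = col p r" using pc pcd unfolding Ir_def by auto
    have p: "p < m" "c < m" using p0 col[OF p0(1) r] by auto
    show "g * h \<le> (case pc of (p,c) \<Rightarrow> card {K \<in> KG. cls G K = p} * card {L \<in> KF. cls F L = c})"
      using mult_le_mono[OF cG[OF p(1)] cF[OF p(2)]] pcd by simp
  qed
  have "card (Ir r) * (g*h) \<le> (\<Sum>(p,c)\<in>Ir r. card {K \<in> KG. cls G K = p} * card {L \<in> KF. cls F L = c})"
    using sum_bounded_below[of "Ir r" "g*h", OF lb] by simp
  hence "(m-1)*g*h \<le> (\<Sum>(p,c)\<in>Ir r. card {K \<in> KG. cls G K = p} * card {L \<in> KF. cls F L = c})"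
    using Ir_card[OF r] by (simp add: mult.assoc)
  thus "(m-1)*g*h + 1 \<le> card {X \<in> Prods G KG F KF (\<lambda>p c. c \<noteq> tau p) \<union> Regs a b G F CsB. cls (cmp a B G F) X = r}"
    using cnt pc CsB_cls[OF r] by linarith
qed


lemma famG_2: "\<exists>f Ks. struct 2 f Ks \<and> (\<forall>r<m. m \<le> card {K \<in> Ks. cls f K = r})"
proof -
  have u: "\<And>r. r < m \<Longrightarrow> 1 \<le> card {K \<in> U1. cls f1 K = r}" using unary_cnt by simp
  note st = stepG[OF unary_struct unary_struct _ _ u u]
  have "m \<le> (m-1)*1*1 + 1" by simp
  hence "\<forall>r<m. m \<le> card {X \<in> Prods f1 U1 f1 U1 (\<lambda>p c. c \<noteq> tau p) \<union> Regs 1 1 f1 f1 CsB. cls (cmp 1 B f1 f1) X = r}"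
    using st(2) by fastforce
  moreover have "struct 2 (cmp 1 B f1 f1) (Prods f1 U1 f1 U1 (\<lambda>p c. c \<noteq> tau p) \<union> Regs 1 1 f1 f1 CsB)"
    using st(1) by (simp add: numeral_2_eq_2)
  ultimately show ?thesis by blast
qed

lemma famG: "1 \<le> n \<Longrightarrow> \<exists>f Ks. struct n f Ks \<and> (\<forall>r<m. eG m n \<le> card {K \<in> Ks. cls f K = r})"
proof (induction n rule: less_induct)
  case (less n)
  consider (one) "n = Suc 0" | (two) "n = Suc (Suc 0)" | (more) n' where "n = Suc (Suc (Suc n'))"
    using less.prems by (metis One_nat_def Suc_le_D le_SucE nat.exhaust not_one_le_zero)
  thus ?case
  proof cases
    case one
    have "struct (Suc 0) f1 U1" using unary_struct by simp
    moreover have "\<forall>r<m. eG m (Suc 0) \<le> card {K \<in> U1. cls f1 K = r}" using unary_cnt by simp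
    ultimately show ?thesis using one by blast
  next
    case two show ?thesis using famG_2 two by (simp add: numeral_2_eq_2)
  next
    case more
    obtain G KG where G: "struct (Suc n') G KG" "\<forall>r<m. eG m (Suc n') \<le> card {K \<in> KG. cls G K = r}"
      using less.IH[of "Suc n'"] more by auto
    obtain F KF where F: "struct 2 F KF" "\<forall>r<m. m \<le> card {K \<in> KF. cls F K = r}" using famG_2 by blast
    note st = stepG[OF G(1) F(1) _ _ , of "eG m (Suc n')" m]
    have st1: "struct (Suc (Suc (Suc n'))) (cmp (Suc n') B G F) (Prods G KG F KF (\<lambda>p c. c \<noteq> tau p) \<union> Regs (Suc n') 2 G F CsB)"
      using st(1) G(2) F(2) by simp
    have "\<forall>r<m. eG m (Suc (Suc (Suc n'))) \<le> card {X \<in> Prods G KG F KF (\<lambda>p c. c \<noteq> tau p) \<union> Regs (Suc n') 2 G F CsB. cls (cmp (Suc n') B G F) X = r}"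
    proof (intro allI impI)
      fix r assume r: "r < m"
      have A: "(m-1)*eG m (Suc n')*m + 1 \<le> card {X \<in> Prods G KG F KF (\<lambda>p c. c \<noteq> tau p) \<union> Regs (Suc n') 2 G F CsB. cls (cmp (Suc n') B G F) X = r}"
        using st(2)[OF _ _ _ _ r] G(2) F(2) by simp
      have Bq: "eG m (Suc (Suc (Suc n'))) = (m-1)*eG m (Suc n')*m" by (simp add: algebra_simps)
      show "eG m (Suc (Suc (Suc n'))) \<le> card {X \<in> Prods G KG F KF (\<lambda>p c. c \<noteq> tau p) \<union> Regs (Suc n') 2 G F CsB. cls (cmp (Suc n') B G F) X = r}"
        unfolding Bq using A by linarith
    qed
    thus ?thesis using st1 more by blast
  qed
qed

lemma card_classes: assumes s: "struct n f Ks" and c: "\<And>r. r < m \<Longrightarrow> e \<le> card {K \<in> Ks. cls f K = r}"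
  shows "m * e \<le> card Ks"
proof -
  have fin: "finite Ks" using struct_finite[OF s] .
  have "m * e = (\<Sum>r<m. e)" by simp
  also have "\<dots> \<le> (\<Sum>r<m. card {K \<in> Ks. cls f K = r})" by (rule sum_mono) (use c in auto)
  also have "\<dots> = card (\<Union>r<m. {K \<in> Ks. cls f K = r})"
    by (rule card_UN_disjoint[symmetric]) (use fin in auto)
  also have "\<dots> \<le> card Ks" by (rule card_mono[OF fin]) auto
  finally show ?thesis .
qed

lemma QG: assumes "2 \<le> n" shows "2 ^ ((m-1)^((n-1) div 2) * m^((n+2) div 2)) \<le> Q n k"
proof -
  have n1: "1 \<le> n" using assms by simp
  obtain f Ks where fK: "struct n f Ks" "\<forall>r<m. eG m n \<le> card {K \<in> Ks. cls f K = r}"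
    using famG[OF n1] by blast
  have "m * eG m n \<le> card Ks" using card_classes[OF fK(1)] fK(2) by blast
  hence "(2::nat) ^ (m * eG m n) \<le> 2 ^ card Ks" by (intro power_increasing) auto
  also have "\<dots> \<le> Q n k" using struct_Q[OF fK(1)] .
  finally show ?thesis using eG_formula[of n m] assms by simp
qed

end



lemma modadd_inj: assumes "x < (r::nat)" "y < r" "(a + x) mod r = (a + y) mod r" shows "x = y"
proof -
  have "[a + x = a + y] (mod r)" using assms(3) by (simp add: cong_def)
  hence "[x = y] (mod r)" by (simp add: cong_add_lcancel_nat)
  thus ?thesis using cong_less_modulus_unique_nat assms(1,2) by blast
qed

lemma mod2_inj: assumes "odd (r::nat)" "x < r" "y < r" "(a + 2*x) mod r = (a + 2*y) mod r" shows "x = y"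
proof -
  have "[a + 2*x = a + 2*y] (mod r)" using assms(4) by (simp add: cong_def)
  hence "[2*x = 2*y] (mod r)" by (simp add: cong_add_lcancel_nat)
  moreover have "coprime 2 r" using assms(1) by simp
  ultimately have "[x = y] (mod r)" using cong_mult_lcancel_nat by blast
  thus ?thesis using cong_less_modulus_unique_nat assms(2,3) by blast
qed

definition Hodd :: "nat \<Rightarrow> nat \<Rightarrow> nat \<Rightarrow> nat" where "Hodd m p c = (p + 2*c) mod m"
definition todd :: "nat \<Rightarrow> nat \<Rightarrow> nat" where "todd m p = (m - p) mod m"

lemma todd_inj: assumes "p < m" "p' < m" "todd m p = todd m p'" shows "p = p'"
proof (cases "p = 0")
  case True
  hence "todd m p' = 0" using assms(3) unfolding todd_def by simp
  hence "p' = 0" using assms(2) unfolding todd_def by (cases "p' = 0") auto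
  thus ?thesis using True by simp
next
  case False
  hence tp: "todd m p = m - p" using assms(1) unfolding todd_def by simp
  have "p' \<noteq> 0" using assms(3) tp False assms(1) unfolding todd_def by (cases "p' = 0") auto
  hence "todd m p' = m - p'" using assms(2) unfolding todd_def by simp
  thus ?thesis using tp assms by simp
qed

lemma mu_odd: assumes "p < m" shows "Hodd m p (todd m p) = todd m p"
proof (cases "p = 0")
  case True thus ?thesis unfolding Hodd_def todd_def by simp
next
  case False
  hence t: "todd m p = m - p" using assms unfolding todd_def by simp
  have e: "p + 2*(m-p) = (m - p) + m" using assms by simp
  have "(p + 2*(m-p)) mod m = ((m - p) + m) mod m" by (simp only: e)
  also have "\<dots> = (m - p) mod m" by simp
  finally have "(p + 2*(m-p)) mod m = (m - p) mod m" .
  moreover have "(m - p) mod m = m - p" using False assms by simp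
  ultimately show ?thesis unfolding Hodd_def using t by simp
qed

lemma QG_odd: assumes m: "odd m" "1 \<le> m" and n: "2 \<le> n"
  shows "2 ^ ((m-1)^((n-1) div 2) * m^((n+2) div 2)) \<le> Q n (2*m+1)"
proof -
  interpret ctxH m "2*m+1" "Hodd m" "todd m"
  proof
    show "2*m+1 = 2*m+1" by simp
    show "1 \<le> m" using m by simp
    fix p c assume "p < m" "c < m" thus "Hodd m p c < m" unfolding Hodd_def by simp
  next
    fix p c c' assume "p < m" "c < m" "c' < m" "Hodd m p c = Hodd m p c'"
    thus "c = c'" using mod2_inj[OF m(1)] unfolding Hodd_def by blast
  next
    fix p p' c assume "p < m" "p' < m" "c < m" "Hodd m p c = Hodd m p' c"
    thus "p = p'" using modadd_inj[of p m p' "2*c"] unfolding Hodd_def by (simp add: add.commute)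
  next
    fix p assume "p < m" thus "todd m p < m" unfolding todd_def using m by simp
  next
    fix p p' assume "p < m" "p' < m" "todd m p = todd m p'" thus "p = p'" by (rule todd_inj)
  next
    fix p p' assume "p < m" "p' < m" "Hodd m p (todd m p) = Hodd m p' (todd m p')"
    thus "p = p'" using mu_odd todd_inj by metis
  qed
  show ?thesis using QG[OF n] .
qed


definition Hev :: "nat \<Rightarrow> nat \<Rightarrow> nat \<Rightarrow> nat" where
  "Hev r p c = (if p < r \<and> c < r then (if p = c then r else (p + c) mod r)
     else if p < r then (2*p) mod r else if c < r then (2*c) mod r else r)"

definition tev :: "nat \<Rightarrow> nat \<Rightarrow> nat" where "tev r p = (if p < r then (p+1) mod r else r)"

lemma Hev_sym: "Hev r p c = Hev r c p" unfolding Hev_def by (auto simp: add.commute)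

lemma Hev_lt: "p \<le> r \<Longrightarrow> c \<le> r \<Longrightarrow> 0 < r \<Longrightarrow> Hev r p c \<le> r"
  unfolding Hev_def by (auto simp: less_imp_le)

lemma Hev_rinj: assumes r: "odd r" and p: "p \<le> r" and c: "c \<le> r" and c': "c' \<le> r" and e: "Hev r p c = Hev r p c'"
  shows "c = c'"
proof -
  have r0: "0 < r" using r by (cases r) auto
  have lt: "\<And>x. x mod r < r" using r0 by simp
  show ?thesis
  proof (cases "p < r")
    case True
    show ?thesis
    proof (cases "c < r"; cases "c' < r")
      assume cc: "c < r" "c' < r"
      show ?thesis
      proof (cases "c = p"; cases "c' = p")
        assume "c = p" "c' = p" thus ?thesis by simp
      next
        assume "c = p" "c' \<noteq> p" thus ?thesis using e cc True lt[of "p+c'"] unfolding Hev_def by simp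
      next
        assume "c \<noteq> p" "c' = p" thus ?thesis using e cc True lt[of "p+c"] unfolding Hev_def by simp
      next
        assume "c \<noteq> p" "c' \<noteq> p"
        hence "(p + c) mod r = (p + c') mod r" using e cc True unfolding Hev_def by simp
        thus ?thesis using modadd_inj cc by blast
      qed
    next
      assume cc: "c < r" "\<not> c' < r"
      hence c'r: "c' = r" using c' by simp
      show ?thesis
      proof (cases "c = p")
        case True thus ?thesis using e cc c'r \<open>p < r\<close> lt[of "2*p"] unfolding Hev_def by simp
      next
        case False
        hence "(p + c) mod r = (p + p) mod r" using e cc c'r \<open>p < r\<close> unfolding Hev_def by (simp add: mult_2)
        hence "c = p" using modadd_inj cc \<open>p < r\<close> by blast
        thus ?thesis using False by simp
      qed
    next
      assume cc: "\<not> c < r" "c' < r"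
      hence cr: "c = r" using c by simp
      show ?thesis
      proof (cases "c' = p")
        case True thus ?thesis using e cc cr \<open>p < r\<close> lt[of "2*p"] unfolding Hev_def by simp
      next
        case False
        hence "(p + c') mod r = (p + p) mod r" using e cc cr \<open>p < r\<close> unfolding Hev_def by (simp add: mult_2)
        hence "c' = p" using modadd_inj cc \<open>p < r\<close> by blast
        thus ?thesis using False by simp
      qed
    next
      assume "\<not> c < r" "\<not> c' < r" thus ?thesis using c c' by simp
    qed
  next
    case False
    hence pr: "\<not> p < r" by simp
    show ?thesis
    proof (cases "c < r"; cases "c' < r")
      assume cc: "c < r" "c' < r"
      hence "(0 + 2*c) mod r = (0 + 2*c') mod r" using e pr unfolding Hev_def by simp
      thus ?thesis using mod2_inj[OF r] cc by blast
    next
      assume cc: "c < r" "\<not> c' < r" thus ?thesis using e pr lt[of "2*c"] unfolding Hev_def by simp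
    next
      assume cc: "\<not> c < r" "c' < r" thus ?thesis using e pr lt[of "2*c'"] unfolding Hev_def by simp
    next
      assume "\<not> c < r" "\<not> c' < r" thus ?thesis using c c' by simp
    qed
  qed
qed

lemma mu_ev: assumes r: "3 \<le> r" and p: "p < r" shows "Hev r p (tev r p) = (2*p+1) mod r"
proof -
  have t: "tev r p = (p+1) mod r" using p unfolding tev_def by simp
  have tl: "(p+1) mod r < r" using r by simp
  have tn: "(p+1) mod r \<noteq> p"
  proof (cases "p + 1 < r")
    case True thus ?thesis by simp
  next
    case False hence "p + 1 = r" using p by simp
    thus ?thesis using r by simp
  qed
  have "Hev r p (tev r p) = (p + (p+1) mod r) mod r" using t tl tn p unfolding Hev_def by simp
  also have "\<dots> = (2*p+1) mod r" by (simp add: mod_add_right_eq mult_2 add.assoc)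
  finally show ?thesis .
qed

lemma QG_even: assumes m: "even m" "4 \<le> m" and n: "2 \<le> n"
  shows "2 ^ ((m-1)^((n-1) div 2) * m^((n+2) div 2)) \<le> Q n (2*m+1)"
proof -
  define r where "r = m - 1"
  have r: "odd r" "3 \<le> r" "m = r + 1" using m unfolding r_def by auto
  have r0: "0 < r" using r by simp
  interpret ctxH m "2*m+1" "Hev r" "tev r"
  proof
    show "2*m+1 = 2*m+1" by simp
    show "1 \<le> m" using m by simp
    fix p c assume pc: "p < m" "c < m"
    hence "p \<le> r" "c \<le> r" using r(3) by auto
    hence "Hev r p c \<le> r" using Hev_lt[OF _ _ r0] by blast
    thus "Hev r p c < m" using r(3) by simp
  next
    fix p c c' assume pc: "p < m" "c < m" "c' < m" "Hev r p c = Hev r p c'"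
    hence "p \<le> r" "c \<le> r" "c' \<le> r" using r(3) by auto
    thus "c = c'" using Hev_rinj[OF r(1)] pc(4) by blast
  next
    fix p p' c assume pc: "p < m" "p' < m" "c < m" "Hev r p c = Hev r p' c"
    hence "p \<le> r" "p' \<le> r" "c \<le> r" using r(3) by auto
    moreover have "Hev r c p = Hev r c p'" using pc(4) Hev_sym by metis
    ultimately show "p = p'" using Hev_rinj[OF r(1)] by blast
  next
    fix p assume "p < m"
    have "(p+1) mod r < r" using r0 by simp
    thus "tev r p < m" unfolding tev_def using r(3) by auto
  next
    fix p p' assume p: "p < m" "p' < m" and e: "tev r p = tev r p'"
    show "p = p'"
    proof (cases "p < r"; cases "p' < r")
      assume pp: "p < r" "p' < r"
      hence "(1 + p) mod r = (1 + p') mod r" using e unfolding tev_def by (simp add: add.commute)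
      thus ?thesis using modadd_inj pp by blast
    next
      assume "p < r" "\<not> p' < r" thus ?thesis using e mod_less_divisor[OF r0, of "p+1"] unfolding tev_def by simp
    next
      assume "\<not> p < r" "p' < r" thus ?thesis using e mod_less_divisor[OF r0, of "p'+1"] unfolding tev_def by simp
    next
      assume "\<not> p < r" "\<not> p' < r" thus ?thesis using p r(3) by simp
    qed
  next
    fix p p' assume p: "p < m" "p' < m" and e: "Hev r p (tev r p) = Hev r p' (tev r p')"
    have rr: "Hev r r (tev r r) = r" unfolding Hev_def tev_def by simp
    show "p = p'"
    proof (cases "p < r"; cases "p' < r")
      assume pp: "p < r" "p' < r"
      hence "(1 + 2*p) mod r = (1 + 2*p') mod r" using e mu_ev[OF r(2)] by (simp add: add.commute)
      thus ?thesis using mod2_inj[OF r(1)] pp by blast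
    next
      assume pp: "p < r" "\<not> p' < r"
      hence "p' = r" using p r(3) by simp
      thus ?thesis using e mu_ev[OF r(2) pp(1)] rr mod_less_divisor[OF r0, of "2*p+1"] by simp
    next
      assume pp: "\<not> p < r" "p' < r"
      hence "p = r" using p r(3) by simp
      thus ?thesis using e mu_ev[OF r(2) pp(2)] rr mod_less_divisor[OF r0, of "2*p'+1"] by simp
    next
      assume "\<not> p < r" "\<not> p' < r" thus ?thesis using p r(3) by simp
    qed
  qed
  show ?thesis using QG[OF n] .
qed



interpretation c5: ctx 2 5 by unfold_locales auto

definition L5 :: "nat \<Rightarrow> nat \<Rightarrow> nat" where
  "L5 u v = [[0,1,2,3,4],[1,0,3,4,2],[2,3,4,0,1],[3,4,1,2,0],[4,2,0,1,3::nat]] ! u ! v"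

definition C6 :: "(nat \<times> nat) set" where "C6 = {(2,3),(2,4),(3,2),(3,4),(4,2),(4,3)}"

lemma bij_of_image: "finite A \<Longrightarrow> f ` A = A \<Longrightarrow> bij_betw f A A"
  unfolding bij_betw_def by (simp add: eq_card_imp_inj_on)

lemma lt5: "(u::nat) < 5 \<longleftrightarrow> u = 0 \<or> u = 1 \<or> u = 2 \<or> u = 3 \<or> u = 4" by auto

lemma ex5: "(\<exists>u'<(5::nat). P u') \<longleftrightarrow> P 0 \<or> P 1 \<or> P 2 \<or> P 3 \<or> P 4"
  using lt5 by metis

lemma set5: "{0..<5::nat} = {0,1,2,3,4}" by auto

lemma latin5: "c5.latin L5"
  unfolding c5.latin_def
proof (intro conjI allI impI)
  fix u :: nat assume "u < 5"
  hence "L5 u ` {0..<5} = {0..<5}" unfolding set5 lt5 by (auto simp: L5_def)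
  thus "bij_betw (L5 u) {0..<5} {0..<5}" by (simp add: bij_of_image)
next
  fix v :: nat assume "v < 5"
  hence "(\<lambda>u. L5 u v) ` {0..<5} = {0..<5}" unfolding set5 lt5 by (auto simp: L5_def)
  thus "bij_betw (\<lambda>u. L5 u v) {0..<5} {0..<5}" by (simp add: bij_of_image)
qed

lemma iota5: "c5.iota 0 = 1" "c5.iota 1 = 0" "c5.iota (Suc 0) = 0" "c5.iota 2 = 3" "c5.iota 3 = 2" "c5.iota 4 = 4"
  by (simp_all add: c5.iota_def)

lemma goodok5: "c5.goodok L5 (\<lambda>p c. p = 0 \<and> c = 0) (\<lambda>p c. 0)"
  unfolding c5.goodok_def
proof (intro allI impI)
  fix u v :: nat assume "u < 2*2" "v < 2*2" "u div 2 = 0 \<and> v div 2 = 0"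
  hence "u = 0 \<or> u = 1" "v = 0 \<or> v = 1" by auto
  thus "L5 u v < 2 * 2 \<and> L5 u v div 2 = 0 \<and> L5 (c5.iota u) v = c5.iota (L5 u v) \<and> L5 u (c5.iota v) = c5.iota (L5 u v)"
    by (auto simp: L5_def iota5)
qed

lemma cellsok5: "c5.cellsok L5 (\<lambda>p c. p = 0 \<and> c = 0) {C6}"
  unfolding c5.cellsok_def
proof (intro conjI ballI allI impI)
  fix C assume "C \<in> {C6}" hence C: "C = C6" by simp
  show "c5.cellclosed L5 C" unfolding c5.cellclosed_def C
  proof (intro conjI allI impI)
    show "C6 \<subseteq> {0..<5} \<times> {0..<5}" by (auto simp: C6_def)
    show "C6 \<noteq> {}" by (auto simp: C6_def)
    fix u v assume uv: "(u,v) \<in> C6"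
    show "L5 u v < 2*2" using uv by (auto simp: C6_def L5_def)
    show "\<exists>u'<5. (u',v) \<in> C6 \<and> L5 u' v = c5.iota (L5 u v)" using uv unfolding ex5 by (auto simp: C6_def L5_def iota5)
    show "\<exists>v'<5. (u,v') \<in> C6 \<and> L5 u v' = c5.iota (L5 u v)" using uv unfolding ex5 by (auto simp: C6_def L5_def iota5)
  qed
  have cl: "c5.clsC L5 C6 = 0"
  proof -
    have "(SOME c. c \<in> C6) \<in> C6" by (rule someI_ex) (auto simp: C6_def)
    thus ?thesis unfolding c5.clsC_def by (auto simp: C6_def L5_def split: prod.split)
  qed
  fix u v assume uv: "(u,v) \<in> C"
  show "L5 u v div 2 = c5.clsC L5 C" using uv C cl by (auto simp: C6_def L5_def)
  show "\<not> (u < 2*2 \<and> v < 2*2 \<and> u div 2 = 0 \<and> v div 2 = 0)" using uv C by (auto simp: C6_def)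
next
  fix C C' c assume "C \<in> {C6}" "C' \<in> {C6}" thus "C = C'" by simp
qed


abbreviation "good5 \<equiv> (\<lambda>p c. p = 0 \<and> c = (0::nat))"
abbreviation "h5 \<equiv> (\<lambda>(p::nat) (c::nat). (0::nat))"

lemma step5:
  assumes sG: "c5.struct a G KG" and sH: "c5.struct b H KH" and a1: "1 \<le> a" and b1: "1 \<le> b"
  shows "c5.struct (a+b) (c5.cmp a L5 G H) (c5.Prods G KG H KH good5 \<union> c5.Regs a b G H {C6})"
    "card {K \<in> KG. c5.cls G K = 0} * card {L \<in> KH. c5.cls H L = 0} + 1
      \<le> card {X \<in> c5.Prods G KG H KH good5 \<union> c5.Regs a b G H {C6}. c5.cls (c5.cmp a L5 G H) X = 0}"
proof -
  show "c5.struct (a+b) (c5.cmp a L5 G H) (c5.Prods G KG H KH good5 \<union> c5.Regs a b G H {C6})"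
    using c5.cmp_struct[OF sG sH latin5 goodok5 cellsok5 a1 b1] .
  have cnt: "card {(K,L) \<in> KG \<times> KH. good5 (c5.cls G K) (c5.cls H L) \<and> h5 (c5.cls G K) (c5.cls H L) = 0}
        + card {C \<in> {C6}. c5.clsC L5 C = 0}
      \<le> card {X \<in> c5.Prods G KG H KH good5 \<union> c5.Regs a b G H {C6}. c5.cls (c5.cmp a L5 G H) X = 0}"
    using c5.cmp_count[OF sG sH latin5 goodok5 cellsok5 a1 b1] .
  have pc: "(\<Sum>(p,c)\<in>{(0::nat,0::nat)}. card {K \<in> KG. c5.cls G K = p} * card {L \<in> KH. c5.cls H L = c})
     \<le> card {(K,L) \<in> KG \<times> KH. good5 (c5.cls G K) (c5.cls H L) \<and> h5 (c5.cls G K) (c5.cls H L) = 0}"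
    by (rule c5.pairs_count[OF c5.struct_finite[OF sG] c5.struct_finite[OF sH]]) auto
  have cl: "c5.clsC L5 C6 = 0"
  proof -
    have "(SOME c. c \<in> C6) \<in> C6" by (rule someI_ex) (auto simp: C6_def)
    thus ?thesis unfolding c5.clsC_def by (auto simp: C6_def L5_def split: prod.split)
  qed
  have "{C \<in> {C6}. c5.clsC L5 C = 0} = {C6}" using cl by auto
  hence "card {C \<in> {C6}. c5.clsC L5 C = 0} = 1" by simp
  thus "card {K \<in> KG. c5.cls G K = 0} * card {L \<in> KH. c5.cls H L = 0} + 1
      \<le> card {X \<in> c5.Prods G KG H KH good5 \<union> c5.Regs a b G H {C6}. c5.cls (c5.cmp a L5 G H) X = 0}"
    using cnt pc by simp
qed

fun cc :: "nat \<Rightarrow> nat" where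
  "cc 0 = 0" | "cc (Suc 0) = 1" | "cc (Suc (Suc 0)) = 2" | "cc (Suc (Suc (Suc n))) = 2 * cc (Suc n) + 1"

lemma fam5_2: "\<exists>f Ks. c5.struct 2 f Ks \<and> 2 \<le> card {K \<in> Ks. c5.cls f K = 0}"
proof -
  have u: "card {K \<in> c5.U1. c5.cls c5.f1 K = 0} = 1" using c5.unary_cnt by simp
  note st = step5[OF c5.unary_struct c5.unary_struct, simplified]
  have "2 \<le> card {X \<in> c5.Prods c5.f1 c5.U1 c5.f1 c5.U1 good5 \<union> c5.Regs 1 1 c5.f1 c5.f1 {C6}. c5.cls (c5.cmp 1 L5 c5.f1 c5.f1) X = 0}"
    using st(2) u by simp
  moreover have "c5.struct 2 (c5.cmp 1 L5 c5.f1 c5.f1) (c5.Prods c5.f1 c5.U1 c5.f1 c5.U1 good5 \<union> c5.Regs 1 1 c5.f1 c5.f1 {C6})"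
    using st(1) by (simp add: numeral_2_eq_2)
  ultimately show ?thesis by blast
qed

lemma fam5: "1 \<le> n \<Longrightarrow> \<exists>f Ks. c5.struct n f Ks \<and> cc n \<le> card {K \<in> Ks. c5.cls f K = 0}"
proof (induction n rule: cc.induct)
  case 1 thus ?case by simp
next
  case 2
  have u: "card {K \<in> c5.U1. c5.cls c5.f1 K = 0} = 1" using c5.unary_cnt by simp
  have "c5.struct (Suc 0) c5.f1 c5.U1" using c5.unary_struct by simp
  moreover have "cc (Suc 0) \<le> card {K \<in> c5.U1. c5.cls c5.f1 K = 0}" using u by simp
  ultimately show ?case by blast
next
  case 3 show ?case using fam5_2 by (simp add: numeral_2_eq_2)
next
  case (4 n)
  obtain G KG where G: "c5.struct (Suc n) G KG" "cc (Suc n) \<le> card {K \<in> KG. c5.cls G K = 0}"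
    using 4 by auto
  obtain H KH where H: "c5.struct 2 H KH" "2 \<le> card {K \<in> KH. c5.cls H K = 0}" using fam5_2 by blast
  note st = step5[OF G(1) H(1)]
  have "cc (Suc n) * 2 \<le> card {K \<in> KG. c5.cls G K = 0} * card {L \<in> KH. c5.cls H L = 0}"
    using G(2) H(2) by (simp add: mult_le_mono)
  hence "cc (Suc (Suc (Suc n))) \<le> card {X \<in> c5.Prods G KG H KH good5 \<union> c5.Regs (Suc n) 2 G H {C6}. c5.cls (c5.cmp (Suc n) L5 G H) X = 0}"
    using st(2) by simp
  moreover have "c5.struct (Suc (Suc (Suc n))) (c5.cmp (Suc n) L5 G H) (c5.Prods G KG H KH good5 \<union> c5.Regs (Suc n) 2 G H {C6})"
    using st(1) by simp
  ultimately show ?case by blast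
qed

lemma cc_bound: "1 \<le> j \<Longrightarrow> 2 * 2 ^ ((j+2) div 2) \<le> 3 * cc j + 2"
proof (induction j rule: cc.induct)
  case (4 n)
  show ?case
  proof (cases "n = 0")
    case True thus ?thesis by simp
  next
    case False
    hence "2 * 2 ^ ((Suc n + 2) div 2) \<le> 3 * cc (Suc n) + 2" using 4 by simp
    moreover have "(Suc (Suc (Suc n)) + 2) div 2 = Suc ((Suc n + 2) div 2)" by simp
    ultimately show ?thesis by simp
  qed
qed auto


lemma top5_count:
  assumes sG: "c5.struct a G KG" and sH: "c5.struct b H KH" and a1: "1 \<le> a" and b1: "1 \<le> b"
  shows "2 ^ (card KG + card KH + card {K \<in> KG. c5.cls G K = 0} * card {L \<in> KH. c5.cls H L = 0}) \<le> Q (a+b) 5"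
proof -
  have pc: "(\<Sum>(p,c)\<in>{(0::nat,0::nat)}. card {K \<in> KG. c5.cls G K = p} * card {L \<in> KH. c5.cls H L = c})
     \<le> card {(K,L) \<in> KG \<times> KH. good5 (c5.cls G K) (c5.cls H L) \<and> h5 (c5.cls G K) (c5.cls H L) = 0}"
    by (rule c5.pairs_count[OF c5.struct_finite[OF sG] c5.struct_finite[OF sH]]) auto
  have pp: "card {(K,L) \<in> KG \<times> KH. good5 (c5.cls G K) (c5.cls H L)} \<le> card (c5.Prods G KG H KH good5)"
    using c5.prods_card[OF sG sH] .
  have "card {K \<in> KG. c5.cls G K = 0} * card {L \<in> KH. c5.cls H L = 0} \<le> card (c5.Prods G KG H KH good5)"
    using pc pp by simp
  hence "2 ^ (card KG + card KH + card {K \<in> KG. c5.cls G K = 0} * card {L \<in> KH. c5.cls H L = 0})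
      \<le> (2::nat) ^ (card KG + card KH + card (c5.Prods G KG H KH good5))"
    by (intro power_increasing) auto
  also have "\<dots> \<le> Q (a+b) 5" using c5.top_Q[OF sG sH latin5 goodok5 a1 b1] .
  finally show ?thesis .
qed

lemma Q5: assumes n: "2 \<le> n" shows "2 ^ (2 ^ ((n+2) div 2)) \<le> Q n 5"
proof (cases "n = 2")
  case True
  have u: "card {K \<in> c5.U1. c5.cls c5.f1 K = 0} = 1" using c5.unary_cnt by simp
  have "2 ^ (card c5.U1 + card c5.U1 + card {K \<in> c5.U1. c5.cls c5.f1 K = 0} * card {L \<in> c5.U1. c5.cls c5.f1 L = 0})
    \<le> Q (1+1) 5" using top5_count[OF c5.unary_struct c5.unary_struct] by simp
  moreover have "(2::nat) ^ (card c5.U1 + card c5.U1 + card {K \<in> c5.U1. c5.cls c5.f1 K = 0} * card {L \<in> c5.U1. c5.cls c5.f1 L = 0}) = 32"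
    using u c5.unary_card by simp
  ultimately have "32 \<le> Q (1+1) 5" by simp
  hence "32 \<le> Q 2 5" by (simp only: one_add_one)
  moreover have "(2::nat) ^ (2 ^ ((n+2) div 2)) \<le> 32" using True by simp
  ultimately show ?thesis using True by simp
next
  case False
  define j where "j = n - 2"
  have j1: "1 \<le> j" and nj: "n = j + 2" using n False unfolding j_def by auto
  obtain G KG where G: "c5.struct j G KG" "cc j \<le> card {K \<in> KG. c5.cls G K = 0}" using fam5[OF j1] by blast
  obtain H KH where H: "c5.struct 2 H KH" "2 \<le> card {K \<in> KH. c5.cls H K = 0}" using fam5_2 by blast
  have c1: "card {K \<in> KG. c5.cls G K = 0} \<le> card KG"
    by (rule card_mono[OF c5.struct_finite[OF G(1)]]) auto
  have c2: "card {K \<in> KH. c5.cls H K = 0} \<le> card KH"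
    by (rule card_mono[OF c5.struct_finite[OF H(1)]]) auto
  have "cc j * 2 \<le> card {K \<in> KG. c5.cls G K = 0} * card {L \<in> KH. c5.cls H L = 0}"
    using G(2) H(2) by (simp add: mult_le_mono)
  hence T: "3 * cc j + 2 \<le> card KG + card KH + card {K \<in> KG. c5.cls G K = 0} * card {L \<in> KH. c5.cls H L = 0}"
    using c1 c2 G(2) H(2) by linarith
  have "(2::nat) ^ ((n+2) div 2) = 2 * 2 ^ ((j+2) div 2)" using nj by simp
  hence "2 ^ ((n+2) div 2) \<le> 3 * cc j + 2" using cc_bound[OF j1] by simp
  hence "(2::nat) ^ (2 ^ ((n+2) div 2)) \<le> 2 ^ (card KG + card KH + card {K \<in> KG. c5.cls G K = 0} * card {L \<in> KH. c5.cls H L = 0})"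
    using T by (intro power_increasing) auto
  also have "\<dots> \<le> Q (j+2) 5" using top5_count[OF G(1) H(1) j1] by simp
  finally show ?thesis using nj by simp
qed



lemma Qall: assumes k: "k = 2*m+1" and m: "2 \<le> m" and n: "2 \<le> n"
  shows "2 ^ ((m-1)^((n-1) div 2) * m^((n+2) div 2)) \<le> Q n k"
proof (cases "m = 2")
  case True
  thus ?thesis using Q5[OF n] k by simp
next
  case False
  show ?thesis
  proof (cases "odd m")
    case True
    have "1 \<le> m" using m by simp
    thus ?thesis using QG_odd[OF True _ n] k by blast
  next
    case ev: False
    have ev': "even m" using ev by simp
    have "4 \<le> m" using m False ev' by presburger
    thus ?thesis using QG_even[OF ev' _ n] k by blast
  qed
qed

lemma floor_part: assumes "1 \<le> n" shows "nat \<lfloor>(real n - 1) / 2\<rfloor> = (n - 1) div 2"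
proof -
  have e: "real n - 1 = real (n - 1)" using assms by (simp add: of_nat_diff)
  have "\<lfloor>(real n - 1) / 2\<rfloor> = \<lfloor>real (n-1) / real (2::nat)\<rfloor>" unfolding e by (simp only: of_nat_numeral)
  also have "\<dots> = int ((n-1) div 2)" by (rule floor_divide_of_nat_eq)
  finally show ?thesis by simp
qed

lemma ceil_part: "nat \<lceil>(real n + 1) / 2\<rceil> = (n + 2) div 2"
proof -
  have "\<lceil>(real n + 1) / 2\<rceil> = int ((n + 2) div 2)"
  proof (rule ceiling_unique)
    consider (e) j where "n = 2*j" | (o) j where "n = 2*j+1" by (metis oddE evenE)
    thus "of_int (int ((n + 2) div 2)) - 1 < (real n + 1) / 2"
      by cases auto
    consider (e) j where "n = 2*j" | (o) j where "n = 2*j+1" by (metis oddE evenE)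
    thus "(real n + 1) / 2 \<le> of_int (int ((n + 2) div 2))"
      by cases auto
  qed
  thus ?thesis by simp
qed

lemma exps: "(n - 1) div 2 + (n + 2) div 2 = n" if "1 \<le> n" for n :: nat
  using that by presburger

theorem theorem2:
  fixes n k :: nat
  assumes "odd k" and "k \<ge> 5" and "n \<ge> 2"
  shows "real (Q n k) \<ge>
           2 powr ((((real k - 3) / 2) ^ nat \<lfloor>(real n - 1) / 2\<rfloor>)
                   * (((real k - 1) / 2) ^ nat \<lceil>(real n + 1) / 2\<rceil>))
     \<and> 2 powr ((((real k - 3) / 2) ^ nat \<lfloor>(real n - 1) / 2\<rfloor>)
                   * (((real k - 1) / 2) ^ nat \<lceil>(real n + 1) / 2\<rceil>))
         > 2 powr ((((real k - 3) / 2) powr (real n / 2)) * (((real k - 1) / 2) powr (real n / 2)))"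
proof -
  obtain m where km: "k = 2*m+1" using assms(1) oddE by blast
  have m2: "2 \<le> m" using km assms(2) by simp
  have A: "(real k - 3) / 2 = real (m - 1)" using km m2 by (simp add: of_nat_diff)
  have B: "(real k - 1) / 2 = real m" using km by simp
  define p where "p = (n - 1) div 2"
  define q where "q = (n + 2) div 2"
  have fp: "nat \<lfloor>(real n - 1) / 2\<rfloor> = p" unfolding p_def using floor_part assms(3) by simp
  have cq: "nat \<lceil>(real n + 1) / 2\<rceil> = q" unfolding q_def using ceil_part .
  have pq: "p + q = n" unfolding p_def q_def using exps assms(3) by simp
  have qp: "real p < real n / 2" "real n / 2 < real q" unfolding p_def q_def using assms(3)
    by (cases "even n"; auto elim!: evenE oddE simp: field_simps)+
  let ?E = "(m-1)^p * m^q"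
  have part1: "real (Q n k) \<ge> 2 powr (real (m-1) ^ p * real m ^ q)"
  proof -
    have "2 ^ ?E \<le> Q n k" using Qall[OF km m2 assms(3)] unfolding p_def q_def .
    hence "real (2 ^ ?E) \<le> real (Q n k)" by linarith
    moreover have "2 powr (real (m-1) ^ p * real m ^ q) = real (2 ^ ?E)"
    proof -
      have e1: "real (m-1) ^ p * real m ^ q = real ?E" by simp
      have "2 powr (real ?E) = (2::real) ^ ?E" by (rule powr_realpow) simp
      thus ?thesis using e1 by simp
    qed
    ultimately show ?thesis by simp
  qed
  have part2: "2 powr (real (m-1) powr (real n / 2) * real m powr (real n / 2))
      < 2 powr (real (m-1) ^ p * real m ^ q)"
  proof -
    let ?a = "real (m-1)" and ?b = "real m"
    have a0: "0 < ?a" using m2 by simp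
    have ab: "?a < ?b" using m2 by simp
    define t where "t = real n / 2 - real p"
    have t0: "0 < t" using qp unfolding t_def by simp
    have tq: "real n / 2 = real q - t" using pq unfolding t_def by (simp add: field_simps)
    have tp: "real n / 2 = real p + t" unfolding t_def by simp
    have "?a powr (real n / 2) * ?b powr (real n / 2) = (?a powr real p * ?b powr real q) * (?a powr t / ?b powr t)"
    proof -
      have e1: "?a powr (real n / 2) = ?a powr real p * ?a powr t" unfolding tp by (rule powr_add)
      have e2: "?b powr (real n / 2) = ?b powr real q / ?b powr t" unfolding tq by (rule powr_diff)
      have bt: "0 < ?b powr t" using m2 by simp
      show ?thesis unfolding e1 e2 using bt by (simp add: field_simps)
    qed
    also have "\<dots> < ?a powr real p * ?b powr real q"
    proof -
      have "?a powr t < ?b powr t" using powr_less_mono2[OF t0 _ ab] a0 by simp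
      hence l1: "?a powr t / ?b powr t < 1" using m2 by simp
      have l2: "0 < ?a powr real p * ?b powr real q" using a0 m2 by simp
      show ?thesis using mult_strict_left_mono[OF l1 l2] by simp
    qed
    also have "\<dots> = ?a ^ p * ?b ^ q" using a0 m2 by (simp add: powr_realpow)
    finally show ?thesis by simp
  qed
  show ?thesis using part1 part2 unfolding A B fp cq by simp
qed


end
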